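(* Let $q$ be a nonzero complex number and let ${\mathbb F}({\rm SP}_q^{2|1})$ be the unital complex superalgebra generated by the even elements $x_+, x_-, x_+^{-1}$ and the odd element $\theta$ subject to $$x_+\theta = q\,\theta x_+,\quad \theta x_- = q\, x_-\theta,\quad x_-x_+ = q^{-2}x_+x_-,\quad \theta^2 = q^{1/2}(q-1)\,x_-x_+,\quad x_+x_+^{-1}={\bf 1}=x_+^{-1}x_+ .$$ Then ${\mathbb F}({\rm SP}_q^{2|1})$ is a $\mathbb Z_2$-graded Hopf algebra, with: (i) coproduct $\Delta:{\mathbb F}({\rm SP}_q^{2|1})\to{\mathbb F}({\rm SP}_q^{2|1})\otimes{\mathbb F}({\rm SP}_q^{2|1})$ defined by $$\Delta(x_+)=x_+\otimes x_+,\quad \Delta(\theta)=\theta\otimes{\bf 1}+{\bf 1}\otimes\theta,\quad \Delta(x_-)=x_+^{-1}\otimes x_- + x_-\otimes x_+^{-1};$$ (ii) counit $\epsilon:{\mathbb F}({\rm SP}_q^{2|1})\to\mathbb C$ given by $\epsilon(x_+)=1$, $\epsilon(\theta)=0$, $\epsilon(x_-)=0$; (iii) a $\mathbb C$-algebra antihomomorphism (coinverse) $S:{\mathbb F}({\rm SP}_q^{2|1})\to{\mathbb F}({\rm SP}_{q^{-1}}^{2|1})$ defined by $$S(x_+)=x_+^{-1},\quad S(\theta)=-\theta,\quad S(x_-)=-x_+x_-x_+ .$$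
   Context: Grades: $\tau(x_\pm)=\tau(x_+^{-1})=0$, $\tau(\theta)=1$. For superalgebras the tensor product ${\mathbb A}\otimes{\mathbb A}$ has the product $(a_1\otimes a_2)(a_3\otimes a_4)=(-1)^{\tau(a_2)\tau(a_3)}a_1a_3\otimes a_2a_4$ for homogeneous elements. A $\mathbb Z_2$-graded (super-)Hopf algebra is a superalgebra ${\mathbb A}$ with linear maps $\Delta,\epsilon,S$ satisfying coassociativity $(\Delta\otimes{\rm id})\Delta=({\rm id}\otimes\Delta)\Delta$, the counit axiom $m(\epsilon\otimes{\rm id})\Delta={\rm id}=m({\rm id}\otimes\epsilon)\Delta$, the antipode axiom $m(S\otimes{\rm id})\Delta=\eta\epsilon=m({\rm id}\otimes S)\Delta$ (with $m$ the product and $\eta$ the unit map), $\Delta({\bf 1})={\bf 1}\otimes{\bf 1}$, $\epsilon({\bf 1})=1$, $S({\bf 1})={\bf 1}$, and $\Delta(ab)=\Delta(a)\Delta(b)$, $\epsilon(ab)=\epsilon(a)\epsilon(b)$, $S(ab)=(-1)^{\tau(a)\tau(b)}S(b)S(a)$. ${\mathbb F}({\rm SP}_{q^{-1}}^{2|1})$ denotes the same construction with $q$ replaced by $q^{-1}$. *)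

theory Defs
  imports Complex_Main "HOL-Library.Poly_Mapping"
begin

definition cmul :: "complex \<Rightarrow> ('i \<Rightarrow>\<^sub>0 complex) \<Rightarrow> ('i \<Rightarrow>\<^sub>0 complex)" where
  "cmul c f = Poly_Mapping.map (\<lambda>x. c * x) f"

definition lin :: "('i \<Rightarrow> ('j \<Rightarrow>\<^sub>0 complex)) \<Rightarrow> ('i \<Rightarrow>\<^sub>0 complex) \<Rightarrow> ('j \<Rightarrow>\<^sub>0 complex)" where
  "lin \<phi> f = (\<Sum>u\<in>Poly_Mapping.keys f. cmul (Poly_Mapping.lookup f u) (\<phi> u))"

definition linf :: "('i \<Rightarrow> complex) \<Rightarrow> ('i \<Rightarrow>\<^sub>0 complex) \<Rightarrow> complex" where
  "linf \<phi> f = (\<Sum>u\<in>Poly_Mapping.keys f. Poly_Mapping.lookup f u * \<phi> u)"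

text \<open>Bilinear extension of a product given on basis elements:
  the product of basis elements u, v is the scalar fst (m u v) times the basis element snd (m u v).\<close>
definition bmul :: "('i \<Rightarrow> 'i \<Rightarrow> complex \<times> 'i) \<Rightarrow> ('i \<Rightarrow>\<^sub>0 complex) \<Rightarrow> ('i \<Rightarrow>\<^sub>0 complex) \<Rightarrow> ('i \<Rightarrow>\<^sub>0 complex)" where
  "bmul m f g = (\<Sum>u\<in>Poly_Mapping.keys f. \<Sum>v\<in>Poly_Mapping.keys g.
       cmul (Poly_Mapping.lookup f u * Poly_Mapping.lookup g v * fst (m u v)) (Poly_Mapping.single (snd (m u v)) 1))"

inductive_set cspan :: "('i \<Rightarrow>\<^sub>0 complex) set \<Rightarrow> ('i \<Rightarrow>\<^sub>0 complex) set" for S where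
  zero: "0 \<in> cspan S"
| step: "s \<in> S \<Longrightarrow> x \<in> cspan S \<Longrightarrow> cmul c s + x \<in> cspan S"

datatype gen = Xp | Xm | Xi | Th   \<comment> \<open>x_+, x_-, x_+^{-1}, theta\<close>

type_synonym word = "gen list"

text \<open>Grade tau: theta is odd, the other generators even.  The parity of a word is the number
  of thetas (mod 2); signs (-1)^(tau a * tau b) are computed from these counts.\<close>
definition par :: "word \<Rightarrow> nat" where
  "par w = length (filter (\<lambda>g. g = Th) w)"

definition ksign :: "word \<Rightarrow> word \<Rightarrow> complex" where
  "ksign a b = (-1) ^ (par a * par b)"

text \<open>Free associative algebra C<x_+,x_-,x_+^{-1},theta>: basis = words, product = concatenation.\<close>
definition m1 :: "word \<Rightarrow> word \<Rightarrow> complex \<times> word" where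
  "m1 u v = (1, u @ v)"

abbreviation fmul :: "(word \<Rightarrow>\<^sub>0 complex) \<Rightarrow> (word \<Rightarrow>\<^sub>0 complex) \<Rightarrow> (word \<Rightarrow>\<^sub>0 complex)" where
  "fmul \<equiv> bmul m1"

definition w :: "word \<Rightarrow> (word \<Rightarrow>\<^sub>0 complex)" where
  "w u = Poly_Mapping.single u 1"

abbreviation one1 :: "word \<Rightarrow>\<^sub>0 complex" where "one1 \<equiv> w []"

text \<open>Graded (super) tensor products of the free algebra with itself (two and three factors):
  basis = pairs/triples of words, product with the Koszul sign rule
  (a1 x a2)(a3 x a4) = (-1)^(tau a2 tau a3) a1a3 x a2a4.\<close>
definition m2 :: "word \<times> word \<Rightarrow> word \<times> word \<Rightarrow> complex \<times> (word \<times> word)" where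
  "m2 a b = (case (a, b) of ((a1, a2), (b1, b2)) \<Rightarrow> (ksign a2 b1, (a1 @ b1, a2 @ b2)))"

definition m3 :: "word \<times> word \<times> word \<Rightarrow> word \<times> word \<times> word \<Rightarrow> complex \<times> (word \<times> word \<times> word)" where
  "m3 a b = (case (a, b) of ((a1, a2, a3), (b1, b2, b3)) \<Rightarrow>
      (ksign a2 b1 * ksign a3 b1 * ksign a3 b2, (a1 @ b1, a2 @ b2, a3 @ b3)))"

definition rels :: "complex \<Rightarrow> (word \<Rightarrow>\<^sub>0 complex) set" where
  "rels q = {
     w [Xp, Th] - cmul q (w [Th, Xp]),
     w [Th, Xm] - cmul q (w [Xm, Th]),
     w [Xm, Xp] - cmul (inverse (q ^ 2)) (w [Xp, Xm]),
     w [Th, Th] - cmul (csqrt q * (q - 1)) (w [Xm, Xp]),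
     w [Xp, Xi] - one1,
     w [Xi, Xp] - one1 }"

definition Iq :: "complex \<Rightarrow> (word \<Rightarrow>\<^sub>0 complex) set" where
  "Iq q = cspan {lin (\<lambda>v. w (a @ v @ b)) r | a b r. r \<in> rels q}"

text \<open>Kernels of F\<otimes>F \<rightarrow> A\<otimes>A and F\<otimes>F\<otimes>F \<rightarrow> A\<otimes>A\<otimes>A (A = F / Iq q).\<close>
definition K2 :: "complex \<Rightarrow> (word \<times> word \<Rightarrow>\<^sub>0 complex) set" where
  "K2 q = cspan ({lin (\<lambda>u. Poly_Mapping.single (u, v) 1) i | i v. i \<in> Iq q}
               \<union> {lin (\<lambda>u. Poly_Mapping.single (v, u) 1) i | i v. i \<in> Iq q})"

definition K3 :: "complex \<Rightarrow> (word \<times> word \<times> word \<Rightarrow>\<^sub>0 complex) set" where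
  "K3 q = cspan ({lin (\<lambda>u. Poly_Mapping.single (u, v, x) 1) i | i v x. i \<in> Iq q}
               \<union> {lin (\<lambda>u. Poly_Mapping.single (v, u, x) 1) i | i v x. i \<in> Iq q}
               \<union> {lin (\<lambda>u. Poly_Mapping.single (v, x, u) 1) i | i v x. i \<in> Iq q})"

definition w2 :: "word \<Rightarrow> word \<Rightarrow> (word \<times> word \<Rightarrow>\<^sub>0 complex)" where
  "w2 a b = Poly_Mapping.single (a, b) 1"

text \<open>Values on x_+^{-1} are forced by multiplicativity and x_+ x_+^{-1} = 1.\<close>
fun Dg :: "gen \<Rightarrow> (word \<times> word \<Rightarrow>\<^sub>0 complex)" where
  "Dg Xp = w2 [Xp] [Xp]"
| "Dg Th = w2 [Th] [] + w2 [] [Th]"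
| "Dg Xm = w2 [Xi] [Xm] + w2 [Xm] [Xi]"
| "Dg Xi = w2 [Xi] [Xi]"

definition Dw :: "word \<Rightarrow> (word \<times> word \<Rightarrow>\<^sub>0 complex)" where
  "Dw u = foldr (\<lambda>g acc. bmul m2 (Dg g) acc) u (w2 [] [])"

definition Delta :: "(word \<Rightarrow>\<^sub>0 complex) \<Rightarrow> (word \<times> word \<Rightarrow>\<^sub>0 complex)" where
  "Delta = lin Dw"

fun eg :: "gen \<Rightarrow> complex" where
  "eg Xp = 1" | "eg Th = 0" | "eg Xm = 0" | "eg Xi = 1"

definition ew :: "word \<Rightarrow> complex" where
  "ew u = prod_list (map eg u)"

definition eps :: "(word \<Rightarrow>\<^sub>0 complex) \<Rightarrow> complex" where
  "eps = linf ew"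

fun Sg :: "gen \<Rightarrow> (word \<Rightarrow>\<^sub>0 complex)" where
  "Sg Xp = w [Xi]"
| "Sg Th = - w [Th]"
| "Sg Xm = - w [Xp, Xm, Xp]"
| "Sg Xi = w [Xp]"

fun Sw :: "word \<Rightarrow> (word \<Rightarrow>\<^sub>0 complex)" where
  "Sw [] = one1"
| "Sw (g # u) = cmul (ksign [g] u) (fmul (Sw u) (Sg g))"

definition S :: "(word \<Rightarrow>\<^sub>0 complex) \<Rightarrow> (word \<Rightarrow>\<^sub>0 complex)" where
  "S = lin Sw"

definition Delta_id :: "(word \<times> word \<Rightarrow>\<^sub>0 complex) \<Rightarrow> (word \<times> word \<times> word \<Rightarrow>\<^sub>0 complex)" where
  "Delta_id = lin (\<lambda>(u, v). lin (\<lambda>(a, b). Poly_Mapping.single (a, b, v) 1) (Dw u))"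

definition id_Delta :: "(word \<times> word \<Rightarrow>\<^sub>0 complex) \<Rightarrow> (word \<times> word \<times> word \<Rightarrow>\<^sub>0 complex)" where
  "id_Delta = lin (\<lambda>(u, v). lin (\<lambda>(a, b). Poly_Mapping.single (u, a, b) 1) (Dw v))"

definition m_eps_id :: "(word \<times> word \<Rightarrow>\<^sub>0 complex) \<Rightarrow> (word \<Rightarrow>\<^sub>0 complex)" where
  "m_eps_id = lin (\<lambda>(u, v). cmul (ew u) (w v))"

definition m_id_eps :: "(word \<times> word \<Rightarrow>\<^sub>0 complex) \<Rightarrow> (word \<Rightarrow>\<^sub>0 complex)" where
  "m_id_eps = lin (\<lambda>(u, v). cmul (ew v) (w u))"

definition m_S_id :: "(word \<times> word \<Rightarrow>\<^sub>0 complex) \<Rightarrow> (word \<Rightarrow>\<^sub>0 complex)" where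
  "m_S_id = lin (\<lambda>(u, v). fmul (Sw u) (w v))"

definition m_id_S :: "(word \<times> word \<Rightarrow>\<^sub>0 complex) \<Rightarrow> (word \<Rightarrow>\<^sub>0 complex)" where
  "m_id_S = lin (\<lambda>(u, v). fmul (w u) (Sw v))"

end

theory Submission
  imports Defs
begin


lemma lookup_cmul[simp]: "Poly_Mapping.lookup (cmul c f) k = c * Poly_Mapping.lookup f k"
  by (simp add: cmul_def map.rep_eq when_def)

lemma keys_cmul_sub: "Poly_Mapping.keys (cmul c f) \<subseteq> Poly_Mapping.keys f"
  by (auto simp: in_keys_iff)

lemma cmul_add[simp]: "cmul c (f + g) = cmul c f + cmul c g"
  by (rule poly_mapping_eqI) (simp add: lookup_add algebra_simps)
lemma cmul_add2: "cmul (c + d) f = cmul c f + cmul d f"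
  by (rule poly_mapping_eqI) (simp add: lookup_add algebra_simps)
lemma cmul_cmul[simp]: "cmul c (cmul d f) = cmul (c * d) f"
  by (rule poly_mapping_eqI) (simp add: algebra_simps)
lemma cmul_zero[simp]: "cmul 0 f = 0" "cmul c 0 = 0"
  by (rule poly_mapping_eqI, simp)+
lemma cmul_one[simp]: "cmul 1 f = f"
  by (rule poly_mapping_eqI) simp
lemma cmul_minus[simp]: "cmul c (- f) = - cmul c f" "cmul c (f - g) = cmul c f - cmul c g"
  by (rule poly_mapping_eqI, simp add: lookup_minus algebra_simps)+
lemma cmul_neg1: "cmul (-1) f = - f"
  by (rule poly_mapping_eqI) simp
lemma cmul_sum: "cmul c (sum F A) = (\<Sum>a\<in>A. cmul c (F a))"
  by (induction A rule: infinite_finite_induct) auto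

lemma lin_super:
  assumes "finite A" "Poly_Mapping.keys f \<subseteq> A"
  shows "lin \<phi> f = (\<Sum>u\<in>A. cmul (Poly_Mapping.lookup f u) (\<phi> u))"
  unfolding lin_def
  by (rule sum.mono_neutral_left) (use assms in \<open>auto simp: in_keys_iff\<close>)

lemma lin_add[simp]: "lin \<phi> (f + g) = lin \<phi> f + lin \<phi> g"
proof -
  let ?A = "Poly_Mapping.keys f \<union> Poly_Mapping.keys g"
  have "lin \<phi> (f + g) = (\<Sum>u\<in>?A. cmul (Poly_Mapping.lookup (f+g) u) (\<phi> u))"
    by (rule lin_super) (use keys_add[of f g] in auto)
  also have "\<dots> = (\<Sum>u\<in>?A. cmul (Poly_Mapping.lookup f u) (\<phi> u)) + (\<Sum>u\<in>?A. cmul (Poly_Mapping.lookup g u) (\<phi> u))"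
    by (simp add: lookup_add cmul_add2 sum.distrib)
  also have "\<dots> = lin \<phi> f + lin \<phi> g"
    by (subst (1 2) lin_super[symmetric]) auto
  finally show ?thesis .
qed

lemma lin_cmul[simp]: "lin \<phi> (cmul c f) = cmul c (lin \<phi> f)"
proof -
  have "lin \<phi> (cmul c f) = (\<Sum>u\<in>Poly_Mapping.keys f. cmul (Poly_Mapping.lookup (cmul c f) u) (\<phi> u))"
    by (rule lin_super) (auto simp: keys_cmul_sub)
  then show ?thesis by (simp add: lin_def cmul_sum)
qed

lemma lin_zero[simp]: "lin \<phi> 0 = 0"
  by (simp add: lin_def)

lemma lin_single[simp]: "lin \<phi> (Poly_Mapping.single u c) = cmul c (\<phi> u)"
  by (cases "c = 0") (simp_all add: lin_def)

lemma lin_minus[simp]: "lin \<phi> (- f) = - lin \<phi> f"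
  by (metis cmul_neg1 lin_cmul)
lemma lin_diff[simp]: "lin \<phi> (f - g) = lin \<phi> f - lin \<phi> g"
  by (metis diff_conv_add_uminus lin_add lin_minus)

lemma lin_fun_add: "lin (\<lambda>u. \<phi> u + \<psi> u) f = lin \<phi> f + lin \<psi> f"
  by (simp add: lin_def sum.distrib)
lemma lin_fun_cmul: "lin (\<lambda>u. cmul c (\<phi> u)) f = cmul c (lin \<phi> f)"
  by (simp add: lin_def cmul_sum mult.commute)

lemma poly_induct[case_names zero step]:
  assumes "P 0" "\<And>u c f. P f \<Longrightarrow> P (Poly_Mapping.single u c + f)"
  shows "P f"
proof (induction f rule: update_induct)
  case const then show ?case using assms(1) .
next
  case (update f a b)
  have "Poly_Mapping.update a b f = Poly_Mapping.single a b + f"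
    using update(1)
    by (intro poly_mapping_eqI) (auto simp: lookup_update lookup_add lookup_single when_def in_keys_iff)
  then show ?case using assms(2) update by simp
qed

definition islin :: "(('i \<Rightarrow>\<^sub>0 complex) \<Rightarrow> ('j \<Rightarrow>\<^sub>0 complex)) \<Rightarrow> bool" where
  "islin L \<longleftrightarrow> (\<forall>f g. L (f + g) = L f + L g) \<and> (\<forall>c f. L (cmul c f) = cmul c (L f))"

lemma islinD: "islin L \<Longrightarrow> L (f + g) = L f + L g" "islin L \<Longrightarrow> L (cmul c f) = cmul c (L f)"
  by (auto simp: islin_def)

lemma islin_zero: "islin L \<Longrightarrow> L 0 = 0"
  by (metis cmul_zero(1) islinD(2))

lemma islin_single: "islin L \<Longrightarrow> L (Poly_Mapping.single u c) = cmul c (L (Poly_Mapping.single u 1))"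
proof -
  assume "islin L"
  have "Poly_Mapping.single u c = cmul c (Poly_Mapping.single u 1)"
    by (rule poly_mapping_eqI) (simp add: lookup_single when_def)
  then show ?thesis using islinD(2)[OF \<open>islin L\<close>] by simp
qed

lemma islin_lin_eq: assumes "islin L" shows "L f = lin (\<lambda>u. L (Poly_Mapping.single u 1)) f"
proof (induction f rule: poly_induct)
  case zero then show ?case using islin_zero[OF assms] by simp
next
  case (step u c f)
  have "L (Poly_Mapping.single u c + f) = L (Poly_Mapping.single u c) + L f"
    by (rule islinD(1)[OF assms])
  then show ?case using step islin_single[OF assms, of u c] by simp
qed

lemma islin_ext:
  assumes "islin L" "islin M" "\<And>u. L (Poly_Mapping.single u 1) = M (Poly_Mapping.single u 1)"
  shows "L f = M f"
proof -
  have "L f = lin (\<lambda>u. L (Poly_Mapping.single u 1)) f" by (rule islin_lin_eq[OF assms(1)])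
  also have "\<dots> = lin (\<lambda>u. M (Poly_Mapping.single u 1)) f" using assms(3) by simp
  also have "\<dots> = M f" by (rule islin_lin_eq[OF assms(2), symmetric])
  finally show ?thesis .
qed

lemma islin_lin[simp]: "islin (lin \<phi>)"
  by (simp add: islin_def)
lemma islin_comp[intro]: "islin L \<Longrightarrow> islin M \<Longrightarrow> islin (\<lambda>f. L (M f))"
  by (simp add: islin_def)
lemma islin_cmul[simp]: "islin (cmul c)"
  by (simp add: islin_def mult.commute)
lemma islin_id[simp]: "islin (\<lambda>f. f)"
  by (simp add: islin_def)
lemma islin_diff: "islin L \<Longrightarrow> L (f - g) = L f - L g"
  by (metis (no_types, lifting) add_diff_cancel_right' diff_add_cancel islinD(1))
lemma islin_addfun[intro]: "islin L \<Longrightarrow> islin M \<Longrightarrow> islin (\<lambda>f. L f + M f)"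
  by (simp add: islin_def algebra_simps)
lemma islin_difffun[intro]: "islin L \<Longrightarrow> islin M \<Longrightarrow> islin (\<lambda>f. L f - M f)"
  by (simp add: islin_def algebra_simps)

lemma lin_comp: assumes "islin L" shows "L (lin \<phi> f) = lin (\<lambda>u. L (\<phi> u)) f"
proof (induction f rule: poly_induct)
  case zero then show ?case using islin_zero[OF assms] by simp
next
  case (step u c f)
  have "L (lin \<phi> (Poly_Mapping.single u c + f)) = L (cmul c (\<phi> u)) + L (lin \<phi> f)"
    using islinD(1)[OF assms] by simp
  then show ?case using step islinD(2)[OF assms] by simp
qed

lemma lin_single1: "lin (\<lambda>u. Poly_Mapping.single u 1) f = f"
  by (induction f rule: poly_induct) (auto simp: poly_mapping_eq_iff lookup_add lookup_single when_def fun_eq_iff)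

lemma lin_cong: "(\<And>u. u \<in> Poly_Mapping.keys f \<Longrightarrow> \<phi> u = \<psi> u) \<Longrightarrow> lin \<phi> f = lin \<psi> f"
  by (simp add: lin_def)

definition bm :: "('i \<Rightarrow> 'i \<Rightarrow> complex \<times> 'i) \<Rightarrow> 'i \<Rightarrow> 'i \<Rightarrow> ('i \<Rightarrow>\<^sub>0 complex)" where
  "bm m u v = cmul (fst (m u v)) (Poly_Mapping.single (snd (m u v)) 1)"

lemma bmul_lin: "bmul m f g = lin (\<lambda>u. lin (\<lambda>v. bm m u v) g) f"
  by (simp add: bmul_def lin_def bm_def cmul_sum mult.assoc)

lemma islin_bmul1[simp]: "islin (bmul m f)"
  unfolding bmul_lin islin_def
  by (simp add: lin_fun_add lin_fun_cmul)
lemma islin_bmul2[simp]: "islin (\<lambda>f. bmul m f g)"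
  unfolding bmul_lin by simp

lemma bmul_single: "bmul m (Poly_Mapping.single u a) (Poly_Mapping.single v b) = cmul (a*b*fst (m u v)) (Poly_Mapping.single (snd (m u v)) 1)"
  by (simp add: bmul_lin bm_def mult.assoc)

lemma bmul_add1[simp]: "bmul m (f + g) h = bmul m f h + bmul m g h"
  by (rule islinD, simp)
lemma bmul_add2[simp]: "bmul m h (f + g) = bmul m h f + bmul m h g"
  by (rule islinD, simp)
lemma bmul_diff1[simp]: "bmul m (f - g) h = bmul m f h - bmul m g h"
  by (rule islin_diff, simp)
lemma bmul_diff2[simp]: "bmul m h (f - g) = bmul m h f - bmul m h g"
  by (rule islin_diff, simp)
lemma bmul_cmul1[simp]: "bmul m (cmul c f) h = cmul c (bmul m f h)"
  by (rule islinD, simp)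
lemma bmul_cmul2[simp]: "bmul m h (cmul c f) = cmul c (bmul m h f)"
  by (rule islinD, simp)
lemma bmul_zero[simp]: "bmul m 0 h = 0" "bmul m h 0 = 0"
  by (simp_all add: bmul_def)
lemma bmul_minus[simp]: "bmul m (- f) h = - bmul m f h" "bmul m h (-f) = - bmul m h f"
  by (metis cmul_neg1 bmul_cmul1 bmul_cmul2)+

lemma islin_bmul1'[simp]: "islin (\<lambda>f. bmul m g (bmul m f h))"
  by (rule islin_comp[of "bmul m g" "\<lambda>f. bmul m f h"]) simp_all
lemma islin_bmul2'[simp]: "islin (\<lambda>f. bmul m (bmul m f g) h)"
  by (rule islin_comp[of "\<lambda>f. bmul m f h" "\<lambda>f. bmul m f g"]) simp_all
lemma islin_bmul3'[simp]: "islin (\<lambda>f. bmul m (bmul m g f) h)"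
  by (rule islin_comp[of "\<lambda>f. bmul m f h" "bmul m g"]) simp_all
lemma islin_bmul4'[simp]: "islin (\<lambda>f. bmul m g (bmul m h f))"
  by (rule islin_comp[of "bmul m g" "bmul m h"]) simp_all

lemma bmul_assoc:
  assumes A: "\<And>u v x. bmul m (bmul m (Poly_Mapping.single u 1) (Poly_Mapping.single v 1)) (Poly_Mapping.single x 1)
     = bmul m (Poly_Mapping.single u 1) (bmul m (Poly_Mapping.single v 1) (Poly_Mapping.single x 1))"
  shows "bmul m (bmul m f g) h = bmul m f (bmul m g h)"
proof -
  have 1: "bmul m (bmul m f (Poly_Mapping.single v 1)) (Poly_Mapping.single x 1) = bmul m f (bmul m (Poly_Mapping.single v 1) (Poly_Mapping.single x 1))" for v x
    by (rule islin_ext[of "\<lambda>f. bmul m (bmul m f (Poly_Mapping.single v 1)) (Poly_Mapping.single x 1)" "\<lambda>f. bmul m f (bmul m (Poly_Mapping.single v 1) (Poly_Mapping.single x 1))"])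
      (simp, simp, rule A)
  have 2: "bmul m (bmul m f g) (Poly_Mapping.single x 1) = bmul m f (bmul m g (Poly_Mapping.single x 1))" for x
    by (rule islin_ext[of "\<lambda>g. bmul m (bmul m f g) (Poly_Mapping.single x 1)" "\<lambda>g. bmul m f (bmul m g (Poly_Mapping.single x 1))"])
      (simp, simp, rule 1)
  show ?thesis
    by (rule islin_ext[of "\<lambda>h. bmul m (bmul m f g) h" "\<lambda>h. bmul m f (bmul m g h)"]) (simp, simp, rule 2)
qed


lemma cspan_base: "s \<in> SS \<Longrightarrow> s \<in> cspan SS"
  using cspan.step[OF _ cspan.zero, of s SS 1] by simp
lemma cspan_add: "x \<in> cspan SS \<Longrightarrow> y \<in> cspan SS \<Longrightarrow> x + y \<in> cspan SS"
  by (induction x rule: cspan.induct) (auto simp: add.assoc intro: cspan.step)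
lemma cspan_cmul: "x \<in> cspan SS \<Longrightarrow> cmul c x \<in> cspan SS"
  by (induction x rule: cspan.induct) (auto intro: cspan.step cspan.zero)
lemma cspan_minus: "x \<in> cspan SS \<Longrightarrow> - x \<in> cspan SS"
  by (metis cmul_neg1 cspan_cmul)
lemma cspan_diff: "x \<in> cspan SS \<Longrightarrow> y \<in> cspan SS \<Longrightarrow> x - y \<in> cspan SS"
  by (metis cspan_add cspan_minus diff_conv_add_uminus)
lemma cspan_mono: assumes "SS \<subseteq> TT" "x \<in> cspan SS" shows "x \<in> cspan TT"
  using assms(2) by (induction x rule: cspan.induct) (use assms(1) in \<open>auto intro: cspan.step cspan.zero\<close>)

lemma lin_in_cspan: "(\<And>u. \<phi> u \<in> cspan TT) \<Longrightarrow> lin \<phi> f \<in> cspan TT"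
  by (induction f rule: poly_induct) (auto intro: cspan.zero cspan_add cspan_cmul)

lemma islin_cspan: assumes "islin L" "\<And>s. s \<in> SS \<Longrightarrow> L s \<in> cspan TT" "f \<in> cspan SS" shows "L f \<in> cspan TT"
  using assms(3)
proof (induction f rule: cspan.induct)
  case zero then show ?case using islin_zero[OF assms(1)] cspan.zero by simp
next
  case (step s x c)
  have "L (cmul c s + x) = cmul c (L s) + L x" using islinD[OF assms(1)] by simp
  then show ?case using step assms(2) by (simp add: cspan_add cspan_cmul)
qed

lemma islin_span_ext: assumes "islin L" "\<And>u. L (Poly_Mapping.single u 1) \<in> cspan TT" shows "L f \<in> cspan TT"
proof -
  have "L f = lin (\<lambda>u. L (Poly_Mapping.single u 1)) f" by (rule islin_lin_eq[OF assms(1)])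
  also have "\<dots> \<in> cspan TT" by (rule lin_in_cspan) (rule assms(2))
  finally show ?thesis .
qed

lemma islin_ext2:
  assumes "islin L" "islin M" "\<And>a b. L (Poly_Mapping.single (a,b) 1) = M (Poly_Mapping.single (a,b) 1)"
  shows "L f = M f"
proof (rule islin_ext[OF assms(1,2)])
  fix u :: "'a \<times> 'b"
  obtain a b where "u = (a,b)" by (rule prod.exhaust)
  then show "L (Poly_Mapping.single u 1) = M (Poly_Mapping.single u 1)" using assms(3) by simp
qed

lemma bilin_ext:
  assumes "\<And>g. islin (\<lambda>f. L f g)" "\<And>f. islin (L f)" "\<And>g. islin (\<lambda>f. M f g)" "\<And>f. islin (M f)"
    "\<And>u v. L (Poly_Mapping.single u 1) (Poly_Mapping.single v 1) = M (Poly_Mapping.single u 1) (Poly_Mapping.single v 1)"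
  shows "L f g = M f g"
proof -
  have "L (Poly_Mapping.single u 1) g = M (Poly_Mapping.single u 1) g" for u
    by (rule islin_ext[OF assms(2) assms(4)]) (rule assms(5))
  then show ?thesis by (rule islin_ext[OF assms(1) assms(3)])
qed

lemma par_simps[simp]: "par [] = 0" "par (g # u) = (if g = Th then 1 else 0) + par u" "par (a @ b) = par a + par b"
  by (auto simp: par_def)

lemma ksign_alt: "ksign a b = (if even (par a) \<or> even (par b) then 1 else -1)"
  by (simp add: ksign_def minus_one_power_iff)

lemma m1_simp[simp]: "m1 u v = (1, u @ v)" by (simp add: m1_def)

lemma w_single: "Poly_Mapping.single u 1 = w u" by (simp add: w_def)
lemma w2_single: "Poly_Mapping.single (a,b) 1 = w2 a b" by (simp add: w2_def)

lemma fmul_w[simp]: "fmul (w a) (w b) = w (a @ b)"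
  by (simp add: w_def bmul_single)

lemma fmul_assoc: "fmul (fmul f g) h = fmul f (fmul g h)"
  by (rule bmul_assoc) (simp add: w_single)

lemma fmul_one[simp]: "fmul one1 f = f" "fmul f one1 = f"
  by (rule islin_ext[of "fmul one1" "\<lambda>f. f"], simp, simp, simp add: w_single)
     (rule islin_ext[of "\<lambda>f. fmul f one1" "\<lambda>f. f"], simp, simp, simp add: w_single)

lemma m2_simp[simp]: "m2 (a,b) (c,d) = (ksign b c, (a@c, b@d))" by (simp add: m2_def)
lemma m3_simp[simp]: "m3 (a1,a2,a3) (b1,b2,b3) = (ksign a2 b1 * ksign a3 b1 * ksign a3 b2, (a1@b1, a2@b2, a3@b3))"
  by (simp add: m3_def)

lemma m2_w2[simp]: "bmul m2 (w2 a b) (w2 c d) = cmul (ksign b c) (w2 (a@c) (b@d))"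
  by (simp add: w2_def bmul_single)

lemma ksign_append[simp]: "ksign (a @ b) c = ksign a c * ksign b c" "ksign a (b @ c) = ksign a b * ksign a c"
  by (simp_all add: ksign_def algebra_simps power_add)


lemma ksign_Nil[simp]: "ksign [] a = 1" "ksign a [] = 1"
  by (simp_all add: ksign_def)

lemma m2_assoc_basis: "bmul m2 (bmul m2 (w2 a b) (w2 c d)) (w2 e f) = bmul m2 (w2 a b) (bmul m2 (w2 c d) (w2 e f))"
  by (simp add: mult_ac)

lemma m2_assoc: "bmul m2 (bmul m2 f g) h = bmul m2 f (bmul m2 g h)"
proof (rule bmul_assoc)
  fix u v x :: "word \<times> word"
  obtain a b where 1: "u = (a,b)" by (rule prod.exhaust)
  obtain c d where 2: "v = (c,d)" by (rule prod.exhaust)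
  obtain e f where 3: "x = (e,f)" by (rule prod.exhaust)
  show "bmul m2 (bmul m2 (Poly_Mapping.single u 1) (Poly_Mapping.single v 1)) (Poly_Mapping.single x 1) =
         bmul m2 (Poly_Mapping.single u 1) (bmul m2 (Poly_Mapping.single v 1) (Poly_Mapping.single x 1))"
    unfolding 1 2 3 w2_single by (rule m2_assoc_basis)
qed

lemma m2_one[simp]: "bmul m2 (w2 [] []) f = f" "bmul m2 f (w2 [] []) = f"
  by (rule islin_ext2[of "bmul m2 (w2 [] [])" "\<lambda>f. f"], simp, simp, simp add: w2_single)
     (rule islin_ext2[of "\<lambda>f. bmul m2 f (w2 [] [])" "\<lambda>f. f"], simp, simp, simp add: w2_single)

lemma Dw_simps[simp]: "Dw [] = w2 [] []" "Dw (g # u) = bmul m2 (Dg g) (Dw u)"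
  by (simp_all add: Dw_def)

lemma Dw_append: "Dw (u @ v) = bmul m2 (Dw u) (Dw v)"
  by (induction u) (simp_all add: m2_assoc)

lemma Dw_single[simp]: "Dw [g] = Dg g" by simp

lemma Delta_w[simp]: "Delta (w u) = Dw u"
  by (simp add: Delta_def w_def)

lemma islin_Delta[simp]: "islin Delta" by (simp add: Delta_def)

lemma islin_comp_D1[simp]: "islin (\<lambda>f. Delta (fmul f g))"
  by (rule islin_comp[of Delta "\<lambda>f. fmul f g"]) simp_all
lemma islin_comp_D2[simp]: "islin (\<lambda>g. Delta (fmul f g))"
  by (rule islin_comp[of Delta "fmul f"]) simp_all
lemma islin_comp_D3[simp]: "islin (\<lambda>f. bmul m2 (Delta f) (Delta g))"
  by (rule islin_comp[of "\<lambda>x. bmul m2 x (Delta g)" Delta]) simp_all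
lemma islin_comp_D4[simp]: "islin (\<lambda>g. bmul m2 (Delta f) (Delta g))"
  by (rule islin_comp[of "bmul m2 (Delta f)" Delta]) simp_all

lemma Delta_mult: "Delta (fmul f g) = bmul m2 (Delta f) (Delta g)"
  by (rule bilin_ext[where L="\<lambda>f g. Delta (fmul f g)" and M="\<lambda>f g. bmul m2 (Delta f) (Delta g)"])
     (simp_all add: w_single Dw_append)


lemma keys_sum_sub: "Poly_Mapping.keys (sum F A) \<subseteq> (\<Union>a\<in>A. Poly_Mapping.keys (F a))"
proof
  fix k assume "k \<in> Poly_Mapping.keys (sum F A)"
  then have "(\<Sum>a\<in>A. Poly_Mapping.lookup (F a) k) \<noteq> 0" by (simp add: in_keys_iff lookup_sum)
  then obtain a where "a \<in> A" "Poly_Mapping.lookup (F a) k \<noteq> 0" by (meson sum.neutral)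
  then show "k \<in> (\<Union>a\<in>A. Poly_Mapping.keys (F a))" by (auto simp: in_keys_iff)
qed

lemma keys_bmul: "Poly_Mapping.keys (bmul m f g) \<subseteq> {snd (m u v) | u v. u \<in> Poly_Mapping.keys f \<and> v \<in> Poly_Mapping.keys g}"
proof
  fix k assume k: "k \<in> Poly_Mapping.keys (bmul m f g)"
  show "k \<in> {snd (m u v) | u v. u \<in> Poly_Mapping.keys f \<and> v \<in> Poly_Mapping.keys g}"
  proof (rule ccontr)
    assume n: "k \<notin> {snd (m u v) | u v. u \<in> Poly_Mapping.keys f \<and> v \<in> Poly_Mapping.keys g}"
    have "Poly_Mapping.lookup (bmul m f g) k = 0"
      unfolding bmul_def lookup_sum
      by (rule sum.neutral, rule ballI, rule sum.neutral) (use n in \<open>auto simp: lookup_single when_def\<close>)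
    then show False using k by (simp add: in_keys_iff)
  qed
qed

definition hom2 :: "nat \<Rightarrow> (word \<times> word \<Rightarrow>\<^sub>0 complex) \<Rightarrow> bool" where
  "hom2 p X \<longleftrightarrow> (\<forall>k\<in>Poly_Mapping.keys X. even (par (fst k) + par (snd k)) = even p)"

lemma hom2_mult: "hom2 p X \<Longrightarrow> hom2 q Y \<Longrightarrow> hom2 (p + q) (bmul m2 X Y)"
  unfolding hom2_def
proof (intro ballI)
  assume X: "\<forall>k\<in>Poly_Mapping.keys X. even (par (fst k) + par (snd k)) = even p"
    and Y: "\<forall>k\<in>Poly_Mapping.keys Y. even (par (fst k) + par (snd k)) = even q"
  fix k assume "k \<in> Poly_Mapping.keys (bmul m2 X Y)"
  then obtain u v where uv: "u \<in> Poly_Mapping.keys X" "v \<in> Poly_Mapping.keys Y" "k = snd (m2 u v)"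
    using keys_bmul[of m2 X Y] by blast
  obtain a b where u: "u = (a,b)" by (rule prod.exhaust)
  obtain c d where v: "v = (c,d)" by (rule prod.exhaust)
  have "even (par a + par b) = even p" using X uv(1) u by auto
  moreover have "even (par c + par d) = even q" using Y uv(2) v by auto
  ultimately show "even (par (fst k) + par (snd k)) = even (p + q)"
    using uv(3) u v by auto
qed

lemma hom2_Dg: "hom2 (par [g]) (Dg g)"
  by (cases g) (auto simp: hom2_def w2_def dest!: set_mp[OF keys_add])

lemma hom2_one: "hom2 0 (w2 [] [])" by (simp add: hom2_def w2_def)

lemma hom2_Dw: "hom2 (par u) (Dw u)"
proof (induction u)
  case Nil then show ?case using hom2_one by simp
next
  case (Cons g u)
  have "par (g # u) = par [g] + par u" by simp
  then show ?case using hom2_mult[OF hom2_Dg Cons] by simp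
qed

lemma islin_ext_keys:
  assumes "islin L" "islin M" "\<And>u. u \<in> Poly_Mapping.keys f \<Longrightarrow> L (Poly_Mapping.single u 1) = M (Poly_Mapping.single u 1)"
  shows "L f = M f"
proof -
  have "L f = lin (\<lambda>u. L (Poly_Mapping.single u 1)) f" by (rule islin_lin_eq[OF assms(1)])
  also have "\<dots> = lin (\<lambda>u. M (Poly_Mapping.single u 1)) f" by (rule lin_cong) (rule assms(3))
  also have "\<dots> = M f" by (rule islin_lin_eq[OF assms(2), symmetric])
  finally show ?thesis .
qed

lemma sign_par: "even (par x + par y) = even (par c) \<Longrightarrow> ksign b x * ksign b y = ksign b c"
  by (simp add: ksign_def power_add[symmetric] distrib_left[symmetric] minus_one_power_iff even_mult_iff; blast)
lemma sign_par': "even (par x + par y) = even (par c) \<Longrightarrow> ksign x b * ksign y b = ksign c b"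
  by (simp add: ksign_def power_add[symmetric] distrib_right[symmetric] minus_one_power_iff even_mult_iff; blast)

definition EL :: "word \<Rightarrow> (word \<times> word \<Rightarrow>\<^sub>0 complex) \<Rightarrow> (word \<times> word \<times> word \<Rightarrow>\<^sub>0 complex)" where
  "EL v Z = lin (\<lambda>(a, b). Poly_Mapping.single (a, b, v) 1) Z"
definition ER :: "word \<Rightarrow> (word \<times> word \<Rightarrow>\<^sub>0 complex) \<Rightarrow> (word \<times> word \<times> word \<Rightarrow>\<^sub>0 complex)" where
  "ER u Z = lin (\<lambda>(a, b). Poly_Mapping.single (u, a, b) 1) Z"

lemma islin_EL[simp]: "islin (EL v)" by (simp add: EL_def[abs_def])
lemma islin_ER[simp]: "islin (ER v)" by (simp add: ER_def[abs_def])
lemma EL_w2[simp]: "EL v (w2 a b) = Poly_Mapping.single (a, b, v) 1" by (simp add: EL_def w2_def)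
lemma ER_w2[simp]: "ER u (w2 a b) = Poly_Mapping.single (u, a, b) 1" by (simp add: ER_def w2_def)
lemma EL_cmul[simp]: "EL v (cmul c Z) = cmul c (EL v Z)" by (simp add: EL_def)
lemma ER_cmul[simp]: "ER v (cmul c Z) = cmul c (ER v Z)" by (simp add: ER_def)
lemma EL_add[simp]: "EL v (Z + Z') = EL v Z + EL v Z'" by (simp add: EL_def)
lemma ER_add[simp]: "ER v (Z + Z') = ER v Z + ER v Z'" by (simp add: ER_def)
lemma EL_lin: "EL v Z = lin (\<lambda>(a, b). Poly_Mapping.single (a, b, v) 1) Z" by (simp add: EL_def)

lemma Delta_id_w2[simp]: "Delta_id (w2 u v) = EL v (Dw u)"
  by (simp add: Delta_id_def w2_def EL_def)
lemma id_Delta_w2[simp]: "id_Delta (w2 u v) = ER u (Dw v)"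
  by (simp add: id_Delta_def w2_def ER_def)
lemma islin_Delta_id[simp]: "islin Delta_id" by (simp add: Delta_id_def)
lemma islin_id_Delta[simp]: "islin id_Delta" by (simp add: id_Delta_def)

lemma m3_single: "bmul m3 (Poly_Mapping.single (a1,a2,a3) 1) (Poly_Mapping.single (b1,b2,b3) 1)
  = cmul (ksign a2 b1 * ksign a3 b1 * ksign a3 b2) (Poly_Mapping.single (a1@b1, a2@b2, a3@b3) 1)"
  by (simp add: bmul_single)

lemma hom_EL:
  assumes H: "hom2 (par c) Z2"
  shows "bmul m3 (EL b Z1) (EL d Z2) = cmul (ksign b c) (EL (b@d) (bmul m2 Z1 Z2))"
proof (rule islin_ext2[of "\<lambda>Z1. bmul m3 (EL b Z1) (EL d Z2)" "\<lambda>Z1. cmul (ksign b c) (EL (b@d) (bmul m2 Z1 Z2))"])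
  show "islin (\<lambda>Z1. bmul m3 (EL b Z1) (EL d Z2))"
    by (rule islin_comp[of "\<lambda>x. bmul m3 x (EL d Z2)" "EL b"]) simp_all
  show "islin (\<lambda>Z1. cmul (ksign b c) (EL (b@d) (bmul m2 Z1 Z2)))"
    by (rule islin_comp[of "cmul (ksign b c)"], simp, rule islin_comp[of "EL (b@d)"]) simp_all
  fix x y
  show "bmul m3 (EL b (Poly_Mapping.single (x, y) 1)) (EL d Z2) =
        cmul (ksign b c) (EL (b @ d) (bmul m2 (Poly_Mapping.single (x, y) 1) Z2))"
  proof (rule islin_ext_keys[of "\<lambda>Z2. bmul m3 (EL b (Poly_Mapping.single (x, y) 1)) (EL d Z2)"
        "\<lambda>Z2. cmul (ksign b c) (EL (b @ d) (bmul m2 (Poly_Mapping.single (x, y) 1) Z2))"])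
    show "islin (\<lambda>Z2. bmul m3 (EL b (Poly_Mapping.single (x, y) 1)) (EL d Z2))"
      by (rule islin_comp[of "bmul m3 _" "EL d"]) simp_all
    show "islin (\<lambda>Z2. cmul (ksign b c) (EL (b @ d) (bmul m2 (Poly_Mapping.single (x, y) 1) Z2)))"
      by (rule islin_comp[of "cmul (ksign b c)"], simp, rule islin_comp[of "EL (b@d)"]) simp_all
    fix k assume k: "k \<in> Poly_Mapping.keys Z2"
    obtain x' y' where kk: "k = (x', y')" by (rule prod.exhaust)
    have "even (par x' + par y') = even (par c)" using H k kk by (auto simp: hom2_def)
    then have s: "ksign b x' * ksign b y' = ksign b c" by (rule sign_par)
    show "bmul m3 (EL b (Poly_Mapping.single (x, y) 1)) (EL d (Poly_Mapping.single k 1)) =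
         cmul (ksign b c) (EL (b @ d) (bmul m2 (Poly_Mapping.single (x, y) 1) (Poly_Mapping.single k 1)))"
    proof -
      have s2: "ksign y x' * ksign b x' * ksign b y' = ksign b c * ksign y x'"
        by (simp only: mult.assoc s) (rule mult.commute)
      have "bmul m3 (EL b (Poly_Mapping.single (x, y) 1)) (EL d (Poly_Mapping.single k 1)) = 
          cmul (ksign y x' * ksign b x' * ksign b y') (Poly_Mapping.single (x @ x', y @ y', b @ d) 1)"
        by (simp add: kk w2_single m3_single)
      also have "\<dots> = cmul (ksign b c * ksign y x') (Poly_Mapping.single (x @ x', y @ y', b @ d) 1)"
        by (simp only: s2)
      also have "\<dots> = cmul (ksign b c) (EL (b @ d) (bmul m2 (Poly_Mapping.single (x, y) 1) (Poly_Mapping.single k 1)))"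
        by (simp add: kk w2_single)
      finally show ?thesis .
    qed
  qed
qed


lemma hom_ER:
  assumes H: "hom2 (par b) Z1"
  shows "bmul m3 (ER a Z1) (ER c Z2) = cmul (ksign b c) (ER (a@c) (bmul m2 Z1 Z2))"
proof (rule islin_ext_keys[of "\<lambda>Z1. bmul m3 (ER a Z1) (ER c Z2)" "\<lambda>Z1. cmul (ksign b c) (ER (a@c) (bmul m2 Z1 Z2))"])
  show "islin (\<lambda>Z1. bmul m3 (ER a Z1) (ER c Z2))"
    by (rule islin_comp[of "\<lambda>x. bmul m3 x (ER c Z2)" "ER a"]) simp_all
  show "islin (\<lambda>Z1. cmul (ksign b c) (ER (a@c) (bmul m2 Z1 Z2)))"
    by (rule islin_comp[of "cmul (ksign b c)"], simp, rule islin_comp[of "ER (a@c)"]) simp_all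
  fix k assume k: "k \<in> Poly_Mapping.keys Z1"
  obtain x y where kk: "k = (x, y)" by (rule prod.exhaust)
  have "even (par x + par y) = even (par b)" using H k kk by (auto simp: hom2_def)
  then have s: "ksign x c * ksign y c = ksign b c" by (rule sign_par')
  show "bmul m3 (ER a (Poly_Mapping.single k 1)) (ER c Z2) =
        cmul (ksign b c) (ER (a @ c) (bmul m2 (Poly_Mapping.single k 1) Z2))"
  proof (rule islin_ext2[of "\<lambda>Z2. bmul m3 (ER a (Poly_Mapping.single k 1)) (ER c Z2)"
        "\<lambda>Z2. cmul (ksign b c) (ER (a @ c) (bmul m2 (Poly_Mapping.single k 1) Z2))"])
    show "islin (\<lambda>Z2. bmul m3 (ER a (Poly_Mapping.single k 1)) (ER c Z2))"
      by (rule islin_comp[of "bmul m3 _" "ER c"]) simp_all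
    show "islin (\<lambda>Z2. cmul (ksign b c) (ER (a @ c) (bmul m2 (Poly_Mapping.single k 1) Z2)))"
      by (rule islin_comp[of "cmul (ksign b c)"], simp, rule islin_comp[of "ER (a@c)"]) simp_all
    fix x' y'
    have s2: "ksign x c * ksign y c * ksign y x' = ksign b c * ksign y x'"
      by (simp only: s)
    have "bmul m3 (ER a (Poly_Mapping.single k 1)) (ER c (Poly_Mapping.single (x', y') 1)) = 
        cmul (ksign x c * ksign y c * ksign y x') (Poly_Mapping.single (a @ c, x @ x', y @ y') 1)"
      by (simp add: kk w2_single m3_single)
    also have "\<dots> = cmul (ksign b c * ksign y x') (Poly_Mapping.single (a @ c, x @ x', y @ y') 1)"
      by (simp only: s2)
    also have "\<dots> = cmul (ksign b c) (ER (a @ c) (bmul m2 (Poly_Mapping.single k 1) (Poly_Mapping.single (x', y') 1)))"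
      by (simp add: kk w2_single)
    finally show "bmul m3 (ER a (Poly_Mapping.single k 1)) (ER c (Poly_Mapping.single (x', y') 1)) =
        cmul (ksign b c) (ER (a @ c) (bmul m2 (Poly_Mapping.single k 1) (Poly_Mapping.single (x', y') 1)))" .
  qed
qed

lemma bilin_ext2:
  fixes L M :: "(word \<times> word \<Rightarrow>\<^sub>0 complex) \<Rightarrow> (word \<times> word \<Rightarrow>\<^sub>0 complex) \<Rightarrow> ('z \<Rightarrow>\<^sub>0 complex)"
  assumes "\<And>g. islin (\<lambda>f. L f g)" "\<And>f. islin (L f)" "\<And>g. islin (\<lambda>f. M f g)" "\<And>f. islin (M f)"
    "\<And>a b c d. L (Poly_Mapping.single (a,b) 1) (Poly_Mapping.single (c,d) 1) = M (Poly_Mapping.single (a,b) 1) (Poly_Mapping.single (c,d) 1)"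
  shows "L f g = M f g"
proof (rule bilin_ext[of L M, OF assms(1-4)])
  fix u v :: "word \<times> word"
  obtain a b where "u = (a,b)" by (rule prod.exhaust)
  moreover obtain c d where "v = (c,d)" by (rule prod.exhaust)
  ultimately show "L (Poly_Mapping.single u 1) (Poly_Mapping.single v 1) = M (Poly_Mapping.single u 1) (Poly_Mapping.single v 1)"
    using assms(5) by simp
qed

lemma Delta_id_mult: "Delta_id (bmul m2 X Y) = bmul m3 (Delta_id X) (Delta_id Y)"
proof (rule bilin_ext2[of "\<lambda>X Y. Delta_id (bmul m2 X Y)" "\<lambda>X Y. bmul m3 (Delta_id X) (Delta_id Y)"])
  show "islin (\<lambda>X. Delta_id (bmul m2 X Y))" for Y by (rule islin_comp[of Delta_id]) simp_all
  show "islin (\<lambda>Y. Delta_id (bmul m2 X Y))" for X by (rule islin_comp[of Delta_id]) simp_all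
  show "islin (\<lambda>X. bmul m3 (Delta_id X) (Delta_id Y))" for Y by (rule islin_comp[of "\<lambda>x. bmul m3 x (Delta_id Y)" Delta_id]) simp_all
  show "islin (\<lambda>Y. bmul m3 (Delta_id X) (Delta_id Y))" for X by (rule islin_comp[of "bmul m3 (Delta_id X)" Delta_id]) simp_all
  fix a b c d
  show "Delta_id (bmul m2 (Poly_Mapping.single (a, b) 1) (Poly_Mapping.single (c, d) 1)) =
        bmul m3 (Delta_id (Poly_Mapping.single (a, b) 1)) (Delta_id (Poly_Mapping.single (c, d) 1))"
    using hom_EL[OF hom2_Dw[of c], of b "Dw a" d]
    by (simp add: w2_single Dw_append islinD)
qed

lemma id_Delta_mult: "id_Delta (bmul m2 X Y) = bmul m3 (id_Delta X) (id_Delta Y)"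
proof (rule bilin_ext2[of "\<lambda>X Y. id_Delta (bmul m2 X Y)" "\<lambda>X Y. bmul m3 (id_Delta X) (id_Delta Y)"])
  show "islin (\<lambda>X. id_Delta (bmul m2 X Y))" for Y by (rule islin_comp[of id_Delta]) simp_all
  show "islin (\<lambda>Y. id_Delta (bmul m2 X Y))" for X by (rule islin_comp[of id_Delta]) simp_all
  show "islin (\<lambda>X. bmul m3 (id_Delta X) (id_Delta Y))" for Y by (rule islin_comp[of "\<lambda>x. bmul m3 x (id_Delta Y)" id_Delta]) simp_all
  show "islin (\<lambda>Y. bmul m3 (id_Delta X) (id_Delta Y))" for X by (rule islin_comp[of "bmul m3 (id_Delta X)" id_Delta]) simp_all
  fix a b c d
  show "id_Delta (bmul m2 (Poly_Mapping.single (a, b) 1) (Poly_Mapping.single (c, d) 1)) =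
        bmul m3 (id_Delta (Poly_Mapping.single (a, b) 1)) (id_Delta (Poly_Mapping.single (c, d) 1))"
    using hom_ER[OF hom2_Dw[of b], of a c "Dw d"]
    by (simp add: w2_single Dw_append islinD)
qed

lemma Delta_id_add[simp]: "Delta_id (X + Y) = Delta_id X + Delta_id Y" by (simp add: Delta_id_def)
lemma id_Delta_add[simp]: "id_Delta (X + Y) = id_Delta X + id_Delta Y" by (simp add: id_Delta_def)

lemma coassoc_gen: "Delta_id (Dg g) = id_Delta (Dg g)"
  by (cases g) (simp_all add: add_ac)

lemma coassoc_w: "Delta_id (Dw u) = id_Delta (Dw u)"
proof (induction u)
  case Nil then show ?case by simp
next
  case (Cons g u)
  then show ?case by (simp add: Delta_id_mult id_Delta_mult coassoc_gen)
qed

lemma coassoc: "Delta_id (Delta f) = id_Delta (Delta f)"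
  by (rule islin_ext[of "\<lambda>f. Delta_id (Delta f)" "\<lambda>f. id_Delta (Delta f)"])
     (rule islin_comp, simp, simp, rule islin_comp, simp, simp, simp add: w_single coassoc_w)


declare m1_simp[simp del]

lemma lin_w[simp]: "lin \<phi> (w u) = \<phi> u" by (simp add: w_def)

lemma ew_simps[simp]: "ew [] = 1" "ew (g # u) = eg g * ew u" "ew (a @ b) = ew a * ew b"
  by (simp_all add: ew_def)

lemma ew_par: "ew c \<noteq> 0 \<Longrightarrow> par c = 0"
proof (induction c)
  case Nil then show ?case by simp
next
  case (Cons g c) then show ?case by (cases g) auto
qed

lemma ksign_par0: "par c = 0 \<Longrightarrow> ksign b c = 1" "par c = 0 \<Longrightarrow> ksign c b = 1"
  by (simp_all add: ksign_def)

lemma m_eps_id_w2[simp]: "m_eps_id (w2 a b) = cmul (ew a) (w b)" by (simp add: m_eps_id_def w2_def)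
lemma m_id_eps_w2[simp]: "m_id_eps (w2 a b) = cmul (ew b) (w a)" by (simp add: m_id_eps_def w2_def)
lemma islin_m_eps_id[simp]: "islin m_eps_id" by (simp add: m_eps_id_def)
lemma islin_m_id_eps[simp]: "islin m_id_eps" by (simp add: m_id_eps_def)
lemma m_eps_id_add[simp]: "m_eps_id (X + Y) = m_eps_id X + m_eps_id Y" by (simp add: m_eps_id_def)
lemma m_id_eps_add[simp]: "m_id_eps (X + Y) = m_id_eps X + m_id_eps Y" by (simp add: m_id_eps_def)

lemma m_eps_id_cmul[simp]: "m_eps_id (cmul c X) = cmul c (m_eps_id X)" by (simp add: m_eps_id_def)
lemma m_id_eps_cmul[simp]: "m_id_eps (cmul c X) = cmul c (m_id_eps X)" by (simp add: m_id_eps_def)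

lemma m_eps_id_mult: "m_eps_id (bmul m2 X Y) = fmul (m_eps_id X) (m_eps_id Y)"
proof (rule bilin_ext2[of "\<lambda>X Y. m_eps_id (bmul m2 X Y)" "\<lambda>X Y. fmul (m_eps_id X) (m_eps_id Y)"])
  show "islin (\<lambda>X. m_eps_id (bmul m2 X Y))" for Y by (rule islin_comp[of m_eps_id]) simp_all
  show "islin (\<lambda>Y. m_eps_id (bmul m2 X Y))" for X by (rule islin_comp[of m_eps_id]) simp_all
  show "islin (\<lambda>X. fmul (m_eps_id X) (m_eps_id Y))" for Y by (rule islin_comp[of "\<lambda>x. fmul x (m_eps_id Y)" m_eps_id]) simp_all
  show "islin (\<lambda>Y. fmul (m_eps_id X) (m_eps_id Y))" for X by (rule islin_comp[of "fmul (m_eps_id X)" m_eps_id]) simp_all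
  fix a b c d
  show "m_eps_id (bmul m2 (Poly_Mapping.single (a, b) 1) (Poly_Mapping.single (c, d) 1)) =
        fmul (m_eps_id (Poly_Mapping.single (a, b) 1)) (m_eps_id (Poly_Mapping.single (c, d) 1))"
  proof (cases "ew c = 0")
    case True then show ?thesis by (simp add: w2_single)
  next
    case False then have "ksign b c = 1" by (simp add: ew_par ksign_par0)
    then show ?thesis by (simp add: w2_single mult.commute)
  qed
qed

lemma m_id_eps_mult: "m_id_eps (bmul m2 X Y) = fmul (m_id_eps X) (m_id_eps Y)"
proof (rule bilin_ext2[of "\<lambda>X Y. m_id_eps (bmul m2 X Y)" "\<lambda>X Y. fmul (m_id_eps X) (m_id_eps Y)"])
  show "islin (\<lambda>X. m_id_eps (bmul m2 X Y))" for Y by (rule islin_comp[of m_id_eps]) simp_all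
  show "islin (\<lambda>Y. m_id_eps (bmul m2 X Y))" for X by (rule islin_comp[of m_id_eps]) simp_all
  show "islin (\<lambda>X. fmul (m_id_eps X) (m_id_eps Y))" for Y by (rule islin_comp[of "\<lambda>x. fmul x (m_id_eps Y)" m_id_eps]) simp_all
  show "islin (\<lambda>Y. fmul (m_id_eps X) (m_id_eps Y))" for X by (rule islin_comp[of "fmul (m_id_eps X)" m_id_eps]) simp_all
  fix a b c d
  show "m_id_eps (bmul m2 (Poly_Mapping.single (a, b) 1) (Poly_Mapping.single (c, d) 1)) =
        fmul (m_id_eps (Poly_Mapping.single (a, b) 1)) (m_id_eps (Poly_Mapping.single (c, d) 1))"
  proof (cases "ew b = 0")
    case True then show ?thesis by (simp add: w2_single)
  next
    case False then have "ksign b c = 1" by (simp add: ew_par ksign_par0)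
    then show ?thesis by (simp add: w2_single mult.commute)
  qed
qed

lemma m_eps_id_Dw: "m_eps_id (Dw u) = w u"
proof (induction u)
  case Nil then show ?case by simp
next
  case (Cons g u)
  have "m_eps_id (Dg g) = w [g]" by (cases g) simp_all
  then show ?case using Cons by (simp add: m_eps_id_mult)
qed

lemma m_id_eps_Dw: "m_id_eps (Dw u) = w u"
proof (induction u)
  case Nil then show ?case by simp
next
  case (Cons g u)
  have "m_id_eps (Dg g) = w [g]" by (cases g) simp_all
  then show ?case using Cons by (simp add: m_id_eps_mult)
qed

lemma counit_l: "m_eps_id (Delta f) = f"
  by (rule islin_ext[of "\<lambda>f. m_eps_id (Delta f)" "\<lambda>f. f"])
     (rule islin_comp, simp, simp, simp, simp add: w_single m_eps_id_Dw)
lemma counit_r: "m_id_eps (Delta f) = f"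
  by (rule islin_ext[of "\<lambda>f. m_id_eps (Delta f)" "\<lambda>f. f"])
     (rule islin_comp, simp, simp, simp, simp add: w_single m_id_eps_Dw)

lemma linf_super:
  assumes "finite A" "Poly_Mapping.keys f \<subseteq> A"
  shows "linf \<phi> f = (\<Sum>u\<in>A. Poly_Mapping.lookup f u * \<phi> u)"
  unfolding linf_def
  by (rule sum.mono_neutral_left) (use assms in \<open>auto simp: in_keys_iff\<close>)

lemma linf_add[simp]: "linf \<phi> (f + g) = linf \<phi> f + linf \<phi> g"
proof -
  let ?A = "Poly_Mapping.keys f \<union> Poly_Mapping.keys g"
  have "linf \<phi> (f + g) = (\<Sum>u\<in>?A. Poly_Mapping.lookup (f+g) u * \<phi> u)"
    by (rule linf_super) (use keys_add[of f g] in auto)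
  also have "\<dots> = (\<Sum>u\<in>?A. Poly_Mapping.lookup f u * \<phi> u) + (\<Sum>u\<in>?A. Poly_Mapping.lookup g u * \<phi> u)"
    by (simp add: lookup_add distrib_right sum.distrib)
  also have "\<dots> = linf \<phi> f + linf \<phi> g"
    by (subst (1 2) linf_super[symmetric]) auto
  finally show ?thesis .
qed

lemma linf_cmul[simp]: "linf \<phi> (cmul c f) = c * linf \<phi> f"
proof -
  have "linf \<phi> (cmul c f) = (\<Sum>u\<in>Poly_Mapping.keys f. Poly_Mapping.lookup (cmul c f) u * \<phi> u)"
    by (rule linf_super) (auto simp: keys_cmul_sub)
  then show ?thesis by (simp add: linf_def sum_distrib_left mult.assoc)
qed

lemma linf_zero[simp]: "linf \<phi> 0 = 0" by (simp add: linf_def)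
lemma linf_single[simp]: "linf \<phi> (Poly_Mapping.single u c) = c * \<phi> u"
  by (cases "c = 0") (simp_all add: linf_def)
lemma linf_w[simp]: "linf \<phi> (w u) = \<phi> u" by (simp add: w_def)
lemma linf_minus[simp]: "linf \<phi> (- f) = - linf \<phi> f"
  by (metis cmul_neg1 linf_cmul mult_minus1)
lemma linf_diff[simp]: "linf \<phi> (f - g) = linf \<phi> f - linf \<phi> g"
  by (metis diff_conv_add_uminus linf_add linf_minus)

lemma linf_comp: "linf \<phi> (lin \<psi> f) = linf (\<lambda>u. linf \<phi> (\<psi> u)) f"
  by (induction f rule: poly_induct) simp_all

lemma linf_fun_mult: "linf (\<lambda>u. \<phi> u * c) f = linf \<phi> f * c"
  by (simp add: linf_def sum_distrib_right mult.assoc)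

lemma cmul_linf: "cmul (linf \<phi> f) x = lin (\<lambda>u. cmul (\<phi> u) x) f"
  by (induction f rule: poly_induct) (simp_all add: cmul_add2 mult.commute)

lemma eps_w[simp]: "eps (w u) = ew u" by (simp add: eps_def)
lemma eps_add[simp]: "eps (f + g) = eps f + eps g" by (simp add: eps_def)
lemma eps_cmul[simp]: "eps (cmul c f) = c * eps f" by (simp add: eps_def)
lemma eps_diff[simp]: "eps (f - g) = eps f - eps g" by (simp add: eps_def)
lemma eps_zero[simp]: "eps 0 = 0" by (simp add: eps_def)

lemma fmul_lin: "fmul f g = lin (\<lambda>u. lin (\<lambda>v. w (u @ v)) g) f"
  by (simp add: bmul_lin bm_def w_def m1_simp)

lemma eps_mult: "eps (fmul f g) = eps f * eps g"
proof -
  have "eps (fmul f g) = linf (\<lambda>u. linf (\<lambda>v. ew u * ew v) g) f"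
    by (simp add: fmul_lin eps_def linf_comp)
  also have "\<dots> = linf (\<lambda>u. ew u * eps g) f"
    by (simp add: eps_def linf_def sum_distrib_left mult.assoc mult.left_commute)
  also have "\<dots> = eps f * eps g"
    by (simp add: eps_def linf_fun_mult)
  finally show ?thesis .
qed

lemma S_w[simp]: "S (w u) = Sw u" by (simp add: S_def)
lemma islin_S[simp]: "islin S" by (simp add: S_def)
lemma S_add[simp]: "S (f + g) = S f + S g" by (simp add: S_def)
lemma S_cmul[simp]: "S (cmul c f) = cmul c (S f)" by (simp add: S_def)
lemma S_diff[simp]: "S (f - g) = S f - S g" by (simp add: S_def)

lemma ksign_Cons: "ksign (g # a) b = ksign [g] b * ksign a b"
  using ksign_append(1)[of "[g]" a b] by simp

lemma Sw_append: "Sw (a @ b) = cmul (ksign a b) (fmul (Sw b) (Sw a))"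
proof (induction a)
  case Nil then show ?case by simp
next
  case (Cons g a)
  have sg: "ksign [g] (a @ b) * ksign a b = ksign (g # a) b * ksign [g] a"
    by (simp add: ksign_def power_add[symmetric] algebra_simps)
  have "Sw ((g # a) @ b) = cmul (ksign [g] (a @ b)) (fmul (Sw (a @ b)) (Sg g))" by simp
  also have "\<dots> = cmul (ksign [g] (a @ b) * ksign a b) (fmul (Sw b) (fmul (Sw a) (Sg g)))"
    by (simp only: Cons.IH bmul_cmul1 fmul_assoc cmul_cmul)
  also have "\<dots> = cmul (ksign (g # a) b) (fmul (Sw b) (Sw (g # a)))"
    by (simp only: sg Sw.simps bmul_cmul2 cmul_cmul)
  finally show ?case .
qed

lemma m_S_id_w2[simp]: "m_S_id (w2 a b) = fmul (Sw a) (w b)" by (simp add: m_S_id_def w2_def)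
lemma m_id_S_w2[simp]: "m_id_S (w2 a b) = fmul (w a) (Sw b)" by (simp add: m_id_S_def w2_def)
lemma islin_m_S_id[simp]: "islin m_S_id" by (simp add: m_S_id_def)
lemma islin_m_id_S[simp]: "islin m_id_S" by (simp add: m_id_S_def)
lemma m_S_id_add[simp]: "m_S_id (X + Y) = m_S_id X + m_S_id Y" by (simp add: m_S_id_def)
lemma m_id_S_add[simp]: "m_id_S (X + Y) = m_id_S X + m_id_S Y" by (simp add: m_id_S_def)

lemma m_S_id_cmul[simp]: "m_S_id (cmul c X) = cmul c (m_S_id X)" by (simp add: m_S_id_def)
lemma m_id_S_cmul[simp]: "m_id_S (cmul c X) = cmul c (m_id_S X)" by (simp add: m_id_S_def)

definition Tp :: "nat \<Rightarrow> (word \<Rightarrow>\<^sub>0 complex) \<Rightarrow> (word \<times> word \<Rightarrow>\<^sub>0 complex) \<Rightarrow> (word \<Rightarrow>\<^sub>0 complex)" where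
  "Tp p Z Y = lin (\<lambda>k. cmul ((-1) ^ (p * par (fst k))) (fmul (fmul (Sw (fst k)) Z) (w (snd k)))) Y"
definition Up :: "nat \<Rightarrow> (word \<Rightarrow>\<^sub>0 complex) \<Rightarrow> (word \<times> word \<Rightarrow>\<^sub>0 complex) \<Rightarrow> (word \<Rightarrow>\<^sub>0 complex)" where
  "Up p Z Y = lin (\<lambda>k. cmul ((-1) ^ (p * par (snd k))) (fmul (fmul (w (fst k)) Z) (Sw (snd k)))) Y"

lemma Tp_w2: "Tp p Z (w2 c d) = cmul ((-1) ^ (p * par c)) (fmul (fmul (Sw c) Z) (w d))"
  by (simp add: Tp_def w2_def)
lemma Up_w2: "Up p Z (w2 c d) = cmul ((-1) ^ (p * par d)) (fmul (fmul (w c) Z) (Sw d))"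
  by (simp add: Up_def w2_def)

lemma Tp_add: "Tp p (Z1 + Z2) Y = Tp p Z1 Y + Tp p Z2 Y"
  by (simp add: Tp_def lin_fun_add)
lemma Up_add: "Up p (Z1 + Z2) Y = Up p Z1 Y + Up p Z2 Y"
  by (simp add: Up_def lin_fun_add)
lemma Tp_zero: "Tp p 0 Y = 0" by (simp add: Tp_def lin_def)
lemma Up_zero: "Up p 0 Y = 0" by (simp add: Up_def lin_def)
lemma Tp_one: "Tp 0 one1 Y = m_S_id Y"
  by (simp add: Tp_def m_S_id_def case_prod_unfold)
lemma Up_one: "Up 0 one1 Y = m_id_S Y"
  by (simp add: Up_def m_id_S_def case_prod_unfold)

lemma sign_sum: "ksign b c * ksign a c = (-1) ^ ((par a + par b) * par c)"
  by (simp add: ksign_def power_add[symmetric] algebra_simps)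
lemma sign_sum': "ksign d a * ksign d b = (-1) ^ ((par a + par b) * par d)"
  by (simp add: ksign_def power_add[symmetric] algebra_simps)

lemma MS:
  assumes "par a + par b = p"
  shows "m_S_id (bmul m2 (w2 a b) Y) = Tp p (m_S_id (w2 a b)) Y"
proof (rule islin_ext2[of "\<lambda>Y. m_S_id (bmul m2 (w2 a b) Y)" "Tp p (m_S_id (w2 a b))"])
  show "islin (\<lambda>Y. m_S_id (bmul m2 (w2 a b) Y))" by (rule islin_comp[of m_S_id]) simp_all
  show "islin (Tp p (m_S_id (w2 a b)))" by (simp add: Tp_def[abs_def])
  fix c d
  have "m_S_id (bmul m2 (w2 a b) (w2 c d)) = cmul (ksign b c * ksign a c) (fmul (Sw c) (fmul (Sw a) (w (b @ d))))"
    by (simp add: Sw_append fmul_assoc)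
  also have "\<dots> = Tp p (m_S_id (w2 a b)) (w2 c d)"
    by (simp add: Tp_w2 sign_sum assms fmul_assoc)
  finally show "m_S_id (bmul m2 (w2 a b) (Poly_Mapping.single (c, d) 1)) = Tp p (m_S_id (w2 a b)) (Poly_Mapping.single (c, d) 1)"
    by (simp add: w2_single)
qed

lemma fmul_w_split: "fmul (w (c @ a)) X = fmul (w c) (fmul (w a) X)"
  by (simp add: fmul_assoc[symmetric])

lemma MS':
  assumes "par a + par b = p"
  shows "m_id_S (bmul m2 Y (w2 a b)) = Up p (m_id_S (w2 a b)) Y"
proof (rule islin_ext2[of "\<lambda>Y. m_id_S (bmul m2 Y (w2 a b))" "Up p (m_id_S (w2 a b))"])
  show "islin (\<lambda>Y. m_id_S (bmul m2 Y (w2 a b)))" by (rule islin_comp[of m_id_S]) simp_all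
  show "islin (Up p (m_id_S (w2 a b)))" by (simp add: Up_def[abs_def])
  fix c d
  have "m_id_S (bmul m2 (w2 c d) (w2 a b)) = cmul (ksign d a * ksign d b) (fmul (w c) (fmul (w a) (fmul (Sw b) (Sw d))))"
    by (simp add: Sw_append fmul_w_split)
  also have "\<dots> = Up p (m_id_S (w2 a b)) (w2 c d)"
    by (simp add: Up_w2 sign_sum' assms fmul_assoc)
  finally show "m_id_S (bmul m2 (Poly_Mapping.single (c, d) 1) (w2 a b)) = Up p (m_id_S (w2 a b)) (Poly_Mapping.single (c, d) 1)"
    by (simp add: w2_single)
qed


declare m1_simp[simp del]

lemma lookup_w: "Poly_Mapping.lookup (w u) k = (if u = k then 1 else 0)"
  by (simp add: w_def lookup_single when_def)

definition sand :: "word \<Rightarrow> word \<Rightarrow> (word \<Rightarrow>\<^sub>0 complex) \<Rightarrow> (word \<Rightarrow>\<^sub>0 complex)" where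
  "sand a b r = lin (\<lambda>v. w (a @ v @ b)) r"

lemma Iq_alt: "Iq q = cspan {sand a b r | a b r. r \<in> rels q}"
  by (simp add: Iq_def sand_def)

lemma sand_in: "r \<in> rels q \<Longrightarrow> sand a b r \<in> Iq q"
  unfolding Iq_alt by (rule cspan_base) blast

lemma sand_nil: "sand [] [] r = r"
  by (simp add: sand_def w_def lin_single1)

lemma rel_in: "r \<in> rels q \<Longrightarrow> r \<in> Iq q"
  using sand_in[of r q "[]" "[]"] by (simp add: sand_nil)

lemma fmul_w_lin: "fmul (w u) (lin \<phi> r) = lin (\<lambda>v. fmul (w u) (\<phi> v)) r"
  by (rule lin_comp) simp
lemma fmul_lin_w: "fmul (lin \<phi> r) (w u) = lin (\<lambda>v. fmul (\<phi> v) (w u)) r"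
  by (rule lin_comp[of "\<lambda>x. fmul x (w u)"]) simp

lemma Iq_left_w: "f \<in> Iq q \<Longrightarrow> fmul (w u) f \<in> Iq q"
  unfolding Iq_alt
proof (rule islin_cspan[of "fmul (w u)"])
  fix s assume "s \<in> {sand a b r | a b r. r \<in> rels q}"
  then obtain a b r where s: "s = sand a b r" "r \<in> rels q" by blast
  have "fmul (w u) s = sand (u @ a) b r" by (simp add: s sand_def fmul_w_lin)
  then show "fmul (w u) s \<in> cspan {sand a b r | a b r. r \<in> rels q}"
    using sand_in[OF s(2)] by (simp add: Iq_alt)
qed simp_all

lemma Iq_right_w: "f \<in> Iq q \<Longrightarrow> fmul f (w u) \<in> Iq q"
  unfolding Iq_alt
proof (rule islin_cspan[of "\<lambda>f. fmul f (w u)"])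
  fix s assume "s \<in> {sand a b r | a b r. r \<in> rels q}"
  then obtain a b r where s: "s = sand a b r" "r \<in> rels q" by blast
  have "fmul s (w u) = sand a (b @ u) r" by (simp add: s sand_def fmul_lin_w)
  then show "fmul s (w u) \<in> cspan {sand a b r | a b r. r \<in> rels q}"
    using sand_in[OF s(2)] by (simp add: Iq_alt)
qed simp_all

lemma Iq_left: assumes "f \<in> Iq q" shows "fmul g f \<in> Iq q"
proof -
  have "fmul g f = lin (\<lambda>u. fmul (Poly_Mapping.single u 1) f) g"
    by (rule islin_lin_eq) simp
  also have "\<dots> \<in> Iq q" unfolding Iq_def
    by (rule lin_in_cspan) (use Iq_left_w[OF assms] in \<open>simp add: w_single Iq_def\<close>)
  finally show ?thesis .
qed

lemma Iq_right: assumes "f \<in> Iq q" shows "fmul f g \<in> Iq q"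
proof -
  have "fmul f g = lin (\<lambda>u. fmul f (Poly_Mapping.single u 1)) g"
    by (rule islin_lin_eq) simp
  also have "\<dots> \<in> Iq q" unfolding Iq_def
    by (rule lin_in_cspan) (use Iq_right_w[OF assms] in \<open>simp add: w_single Iq_def\<close>)
  finally show ?thesis .
qed

lemma Iq_add: "x \<in> Iq q \<Longrightarrow> y \<in> Iq q \<Longrightarrow> x + y \<in> Iq q" unfolding Iq_def by (rule cspan_add)
lemma Iq_diff: "x \<in> Iq q \<Longrightarrow> y \<in> Iq q \<Longrightarrow> x - y \<in> Iq q" unfolding Iq_def by (rule cspan_diff)
lemma Iq_cmul: "x \<in> Iq q \<Longrightarrow> cmul c x \<in> Iq q" unfolding Iq_def by (rule cspan_cmul)
lemma Iq_minus: "x \<in> Iq q \<Longrightarrow> - x \<in> Iq q" unfolding Iq_def by (rule cspan_minus)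
lemma Iq_zero: "0 \<in> Iq q" unfolding Iq_def by (rule cspan.zero)
lemma Iq_eq: "x = y \<Longrightarrow> y \<in> Iq q \<Longrightarrow> x \<in> Iq q" by simp

definition "r1 q = w [Xp, Th] - cmul q (w [Th, Xp])"
definition "r2 q = w [Th, Xm] - cmul q (w [Xm, Th])"
definition "r3 q = w [Xm, Xp] - cmul (inverse (q ^ 2)) (w [Xp, Xm])"
definition "r4 q = w [Th, Th] - cmul (csqrt q * (q - 1)) (w [Xm, Xp])"
definition "p1 = w [Xp, Xi] - one1"
definition "p2 = w [Xi, Xp] - one1"

lemma rels_eq: "rels q = {r1 q, r2 q, r3 q, r4 q, p1, p2}"
  by (simp add: rels_def r1_def r2_def r3_def r4_def p1_def p2_def)

lemma rels_in: "r1 q \<in> Iq q" "r2 q \<in> Iq q" "r3 q \<in> Iq q" "r4 q \<in> Iq q" "p1 \<in> Iq q" "p2 \<in> Iq q"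
  by (rule rel_in, simp add: rels_eq)+

definition "E q = w [Th, Xi] - cmul q (w [Xi, Th])"

lemma E_in: "E q \<in> Iq q"
proof (rule Iq_eq)
  show "E q = fmul (fmul (w [Xi]) (r1 q)) (w [Xi]) - fmul p2 (w [Th, Xi]) + cmul q (fmul (w [Xi, Th]) p1)"
    by (simp add: E_def r1_def p1_def p2_def poly_mapping_eq_iff fun_eq_iff lookup_add lookup_minus lookup_w)
  show "fmul (fmul (w [Xi]) (r1 q)) (w [Xi]) - fmul p2 (w [Th, Xi]) + cmul q (fmul (w [Xi, Th]) p1) \<in> Iq q"
    by (intro Iq_add Iq_diff Iq_cmul Iq_right Iq_left rels_in)
qed


lemmas conc = ksign_def cmul_neg1 r1_def r2_def r3_def r4_def p1_def p2_def E_def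
  poly_mapping_eq_iff fun_eq_iff lookup_add lookup_minus lookup_w

lemma S_r1: "S (r1 q) \<in> Iq q"
proof (rule Iq_eq)
  show "S (r1 q) = - E q" by (simp add: conc)
  show "- E q \<in> Iq q" by (intro Iq_minus E_in)
qed

lemma S_r2: "S (r2 q) \<in> Iq q"
proof (rule Iq_eq)
  show "S (r2 q) = fmul (w [Xp, Xm]) (r1 q) - fmul (fmul (w [Xp]) (r2 q)) (w [Xp]) + fmul (r1 q) (w [Xm, Xp])"
    by (simp add: conc)
  show "fmul (w [Xp, Xm]) (r1 q) - fmul (fmul (w [Xp]) (r2 q)) (w [Xp]) + fmul (r1 q) (w [Xm, Xp]) \<in> Iq q"
    by (intro Iq_add Iq_diff Iq_right Iq_left rels_in)
qed

lemma S_r3: "S (r3 q) \<in> Iq q"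
proof (rule Iq_eq)
  show "S (r3 q) = cmul (inverse (q ^ 2)) (fmul (w [Xp, Xm]) p1) - fmul p2 (w [Xm, Xp]) - r3 q"
    by (simp add: conc)
  show "cmul (inverse (q ^ 2)) (fmul (w [Xp, Xm]) p1) - fmul p2 (w [Xm, Xp]) - r3 q \<in> Iq q"
    by (intro Iq_cmul Iq_diff Iq_right Iq_left rels_in)
qed

lemma S_r4: "S (r4 q) \<in> Iq q"
proof (rule Iq_eq)
  show "S (r4 q) = cmul (csqrt q * (q - 1)) (fmul p2 (w [Xm, Xp])) - r4 q"
    by (simp add: conc)
  show "cmul (csqrt q * (q - 1)) (fmul p2 (w [Xm, Xp])) - r4 q \<in> Iq q"
    by (intro Iq_cmul Iq_diff Iq_right Iq_left rels_in)
qed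

lemma S_p1: "S p1 \<in> Iq q"
proof (rule Iq_eq)
  show "S p1 = p1" by (simp add: conc)
qed (rule rels_in)
lemma S_p2: "S p2 \<in> Iq q"
proof (rule Iq_eq)
  show "S p2 = p2" by (simp add: conc)
qed (rule rels_in)

lemma rels_form: "r \<in> rels q \<Longrightarrow> \<exists>x z c. r = w x - cmul c (w z) \<and> even (par x) = even (par z)"
  unfolding rels_eq
  apply (elim insertE)
       apply (rule exI[of _ "[Xp, Th]"], rule exI[of _ "[Th, Xp]"], rule exI[of _ q], simp add: r1_def)
      apply (rule exI[of _ "[Th, Xm]"], rule exI[of _ "[Xm, Th]"], rule exI[of _ q], simp add: r2_def)
     apply (rule exI[of _ "[Xm, Xp]"], rule exI[of _ "[Xp, Xm]"], rule exI[of _ "inverse (q^2)"], simp add: r3_def)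
    apply (rule exI[of _ "[Th, Th]"], rule exI[of _ "[Xm, Xp]"], rule exI[of _ "csqrt q * (q - 1)"], simp add: r4_def)
   apply (rule exI[of _ "[Xp, Xi]"], rule exI[of _ "[]"], rule exI[of _ 1], simp add: p1_def)
  apply (rule exI[of _ "[Xi, Xp]"], rule exI[of _ "[]"], rule exI[of _ 1], simp add: p2_def)
  by simp

lemma S_rels: "r \<in> rels q \<Longrightarrow> S r \<in> Iq q"
  unfolding rels_eq using S_r1 S_r2 S_r3 S_r4 S_p1 S_p2 by blast

lemma ksign_par_eq: "even (par x) = even (par z) \<Longrightarrow> ksign a z = ksign a x" "even (par x) = even (par z) \<Longrightarrow> ksign z b = ksign x b"
  by (simp_all add: ksign_def minus_one_power_iff)

lemma S_sand:
  assumes "even (par x) = even (par z)"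
  shows "S (sand a b (w x - cmul c (w z))) = cmul (ksign a x * ksign a b * ksign x b) (fmul (fmul (Sw b) (S (w x - cmul c (w z)))) (Sw a))"
proof -
  have e1: "ksign a z = ksign a x" and e2: "ksign z b = ksign x b"
    using ksign_par_eq[OF assms] by auto
  show ?thesis by (simp add: sand_def Sw_append fmul_assoc e1 e2 mult_ac)
qed

lemma S_Iq: "f \<in> Iq q \<Longrightarrow> S f \<in> Iq q"
  unfolding Iq_alt
proof (rule islin_cspan[of S])
  fix s assume "s \<in> {sand a b r | a b r. r \<in> rels q}"
  then obtain a b r where s: "s = sand a b r" "r \<in> rels q" by blast
  obtain x z c where r: "r = w x - cmul c (w z)" "even (par x) = even (par z)" using rels_form[OF s(2)] by blast
  have "S s = cmul (ksign a x * ksign a b * ksign x b) (fmul (fmul (Sw b) (S r)) (Sw a))"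
    using S_sand[OF r(2)] by (simp add: s r)
  also have "\<dots> \<in> Iq q" by (intro Iq_cmul Iq_right Iq_left S_rels s(2))
  finally show "S s \<in> cspan {sand a b r | a b r. r \<in> rels q}" by (simp add: Iq_alt)
qed simp

lemma eps_sand: "r \<in> rels q \<Longrightarrow> eps (sand a b r) = 0"
  unfolding rels_eq
  by (elim insertE) (simp_all add: sand_def r1_def r2_def r3_def r4_def p1_def p2_def)

lemma eps_Iq: "f \<in> Iq q \<Longrightarrow> eps f = 0"
  unfolding Iq_alt
proof (induction f rule: cspan.induct)
  case zero then show ?case by simp
next
  case (step s x c)
  then obtain a b r where "s = sand a b r" "r \<in> rels q" by blast
  then show ?case using step eps_sand by simp
qed


declare m1_simp[simp del]

definition gi :: "word \<Rightarrow> (word \<Rightarrow>\<^sub>0 complex) \<Rightarrow> (word \<Rightarrow>\<^sub>0 complex)" where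
  "gi y i = lin (\<lambda>u. cmul (ksign y u) (w u)) i"

lemma islin_gi[simp]: "islin (gi y)" by (simp add: gi_def[abs_def])

lemma gi_Iq: "i \<in> Iq q \<Longrightarrow> gi y i \<in> Iq q"
  unfolding Iq_alt
proof (rule islin_cspan[of "gi y"])
  fix s assume "s \<in> {sand a b r | a b r. r \<in> rels q}"
  then obtain a b r where s: "s = sand a b r" "r \<in> rels q" by blast
  obtain x z c where r: "r = w x - cmul c (w z)" "even (par x) = even (par z)" using rels_form[OF s(2)] by blast
  have e1: "ksign y z = ksign y x" using ksign_par_eq[OF r(2)] by auto
  have "gi y s = cmul (ksign y a * ksign y x * ksign y b) s"
    by (simp add: s r gi_def sand_def e1 mult_ac)
  also have "\<dots> \<in> Iq q" using sand_in[OF s(2)] s by (intro Iq_cmul) simp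
  finally show "gi y s \<in> cspan {sand a b r | a b r. r \<in> rels q}" by (simp add: Iq_alt)
qed simp

definition tlf :: "word \<Rightarrow> (word \<Rightarrow>\<^sub>0 complex) \<Rightarrow> (word \<times> word \<Rightarrow>\<^sub>0 complex)" where
  "tlf v i = lin (\<lambda>u. Poly_Mapping.single (u, v) 1) i"
definition trf :: "word \<Rightarrow> (word \<Rightarrow>\<^sub>0 complex) \<Rightarrow> (word \<times> word \<Rightarrow>\<^sub>0 complex)" where
  "trf v i = lin (\<lambda>u. Poly_Mapping.single (v, u) 1) i"

lemma islin_tl[simp]: "islin (tlf v)" by (simp add: tlf_def[abs_def])
lemma islin_tr[simp]: "islin (trf v)" by (simp add: trf_def[abs_def])
lemma tlf_w[simp]: "tlf v (w u) = w2 u v" by (simp add: tlf_def w2_def)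
lemma trf_w[simp]: "trf v (w u) = w2 v u" by (simp add: trf_def w2_def)
lemma tlf_simps[simp]: "tlf v (f + g) = tlf v f + tlf v g" "tlf v (f - g) = tlf v f - tlf v g" "tlf v (cmul c f) = cmul c (tlf v f)"
  by (simp_all add: tlf_def)
lemma trf_simps[simp]: "trf v (f + g) = trf v f + trf v g" "trf v (f - g) = trf v f - trf v g" "trf v (cmul c f) = cmul c (trf v f)"
  by (simp_all add: trf_def)

lemma K2_alt: "K2 q = cspan ({tlf v i | i v. i \<in> Iq q} \<union> {trf v i | i v. i \<in> Iq q})"
  by (simp add: K2_def tlf_def trf_def)

lemma tlf_in: "i \<in> Iq q \<Longrightarrow> tlf v i \<in> K2 q" unfolding K2_alt by (rule cspan_base) blast
lemma trf_in: "i \<in> Iq q \<Longrightarrow> trf v i \<in> K2 q" unfolding K2_alt by (rule cspan_base) blast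

lemma K2_add: "x \<in> K2 q \<Longrightarrow> y \<in> K2 q \<Longrightarrow> x + y \<in> K2 q" unfolding K2_def by (rule cspan_add)
lemma K2_diff: "x \<in> K2 q \<Longrightarrow> y \<in> K2 q \<Longrightarrow> x - y \<in> K2 q" unfolding K2_def by (rule cspan_diff)
lemma K2_cmul: "x \<in> K2 q \<Longrightarrow> cmul c x \<in> K2 q" unfolding K2_def by (rule cspan_cmul)
lemma K2_zero: "0 \<in> K2 q" unfolding K2_def by (rule cspan.zero)
lemma K2_eq: "x = y \<Longrightarrow> y \<in> K2 q \<Longrightarrow> x \<in> K2 q" by simp

lemma ksign_comm: "ksign a b = ksign b a" by (simp add: ksign_def mult.commute)

lemma prod_lt: "bmul m2 (w2 x y) (tlf v i) = tlf (y @ v) (fmul (w x) (gi y i))"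
  by (rule islin_ext[of "\<lambda>i. bmul m2 (w2 x y) (tlf v i)" "\<lambda>i. tlf (y @ v) (fmul (w x) (gi y i))"])
     (rule islin_comp, simp, simp, rule islin_comp, simp, rule islin_comp, simp, simp,
      simp add: w_single gi_def w2_def[symmetric])
lemma prod_rt: "bmul m2 (w2 x y) (trf v i) = cmul (ksign y v) (trf (x @ v) (fmul (w y) i))"
  by (rule islin_ext[of "\<lambda>i. bmul m2 (w2 x y) (trf v i)" "\<lambda>i. cmul (ksign y v) (trf (x @ v) (fmul (w y) i))"])
     (rule islin_comp, simp, simp, rule islin_comp, simp, rule islin_comp, simp, simp,
      simp add: w_single w2_def[symmetric])
lemma prod_tl: "bmul m2 (tlf v i) (w2 x y) = cmul (ksign v x) (tlf (v @ y) (fmul i (w x)))"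
  by (rule islin_ext[of "\<lambda>i. bmul m2 (tlf v i) (w2 x y)" "\<lambda>i. cmul (ksign v x) (tlf (v @ y) (fmul i (w x)))"])
     (rule islin_comp[of "\<lambda>z. bmul m2 z (w2 x y)"], simp, simp, rule islin_comp, simp, rule islin_comp, simp, simp,
      simp add: w_single w2_def[symmetric])
lemma prod_tr: "bmul m2 (trf v i) (w2 x y) = trf (v @ x) (fmul (gi x i) (w y))"
  by (rule islin_ext[of "\<lambda>i. bmul m2 (trf v i) (w2 x y)" "\<lambda>i. trf (v @ x) (fmul (gi x i) (w y))"])
     (rule islin_comp[of "\<lambda>z. bmul m2 z (w2 x y)"], simp, simp, rule islin_comp, simp,
      rule islin_comp[of "\<lambda>z. fmul z (w y)"], simp, simp, simp add: w_single gi_def w2_def[symmetric] ksign_comm)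

lemma K2_left_w2: "X \<in> K2 q \<Longrightarrow> bmul m2 (w2 x y) X \<in> K2 q"
  unfolding K2_alt
proof (rule islin_cspan[of "bmul m2 (w2 x y)"])
  fix s assume "s \<in> {tlf v i | i v. i \<in> Iq q} \<union> {trf v i | i v. i \<in> Iq q}"
  then consider (l) i v where "s = tlf v i" "i \<in> Iq q" | (r) i v where "s = trf v i" "i \<in> Iq q" by blast
  then have "bmul m2 (w2 x y) s \<in> K2 q"
  proof cases
    case l then show ?thesis by (simp add: prod_lt tlf_in Iq_left gi_Iq)
  next
    case r then show ?thesis by (simp add: prod_rt trf_in Iq_left K2_cmul)
  qed
  then show "bmul m2 (w2 x y) s \<in> cspan ({tlf v i | i v. i \<in> Iq q} \<union> {trf v i | i v. i \<in> Iq q})"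
    by (simp add: K2_alt)
qed simp

lemma K2_right_w2: "X \<in> K2 q \<Longrightarrow> bmul m2 X (w2 x y) \<in> K2 q"
  unfolding K2_alt
proof (rule islin_cspan[of "\<lambda>X. bmul m2 X (w2 x y)"])
  fix s assume "s \<in> {tlf v i | i v. i \<in> Iq q} \<union> {trf v i | i v. i \<in> Iq q}"
  then consider (l) i v where "s = tlf v i" "i \<in> Iq q" | (r) i v where "s = trf v i" "i \<in> Iq q" by blast
  then have "bmul m2 s (w2 x y) \<in> K2 q"
  proof cases
    case l then show ?thesis by (simp add: prod_tl tlf_in Iq_right K2_cmul)
  next
    case r then show ?thesis by (simp add: prod_tr trf_in Iq_right gi_Iq)
  qed
  then show "bmul m2 s (w2 x y) \<in> cspan ({tlf v i | i v. i \<in> Iq q} \<union> {trf v i | i v. i \<in> Iq q})"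
    by (simp add: K2_alt)
qed simp

lemma K2_left: assumes "X \<in> K2 q" shows "bmul m2 Y X \<in> K2 q"
proof -
  have "bmul m2 Y X = lin (\<lambda>k. bmul m2 (Poly_Mapping.single k 1) X) Y"
    by (rule islin_lin_eq) simp
  also have "\<dots> \<in> K2 q" unfolding K2_def
  proof (rule lin_in_cspan)
    fix k :: "word \<times> word"
    obtain x y where "k = (x, y)" by (rule prod.exhaust)
    then show "bmul m2 (Poly_Mapping.single k 1) X \<in> cspan ({lin (\<lambda>u. Poly_Mapping.single (u, v) 1) i | i v. i \<in> Iq q}
               \<union> {lin (\<lambda>u. Poly_Mapping.single (v, u) 1) i | i v. i \<in> Iq q})"
      using K2_left_w2[OF assms, of x y] by (simp add: w2_single K2_def)
  qed
  finally show ?thesis .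
qed

lemma K2_right: assumes "X \<in> K2 q" shows "bmul m2 X Y \<in> K2 q"
proof -
  have "bmul m2 X Y = lin (\<lambda>k. bmul m2 X (Poly_Mapping.single k 1)) Y"
    by (rule islin_lin_eq) simp
  also have "\<dots> \<in> K2 q" unfolding K2_def
  proof (rule lin_in_cspan)
    fix k :: "word \<times> word"
    obtain x y where "k = (x, y)" by (rule prod.exhaust)
    then show "bmul m2 X (Poly_Mapping.single k 1) \<in> cspan ({lin (\<lambda>u. Poly_Mapping.single (u, v) 1) i | i v. i \<in> Iq q}
               \<union> {lin (\<lambda>u. Poly_Mapping.single (v, u) 1) i | i v. i \<in> Iq q})"
      using K2_right_w2[OF assms, of x y] by (simp add: w2_single K2_def)
  qed
  finally show ?thesis .
qed



declare m1_simp[simp del]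

lemma lookup_w2: "Poly_Mapping.lookup (w2 a b) k = (if (a, b) = k then 1 else 0)"
  by (simp add: w2_def lookup_single when_def)

lemma Delta_simps[simp]: "Delta (f + g) = Delta f + Delta g" "Delta (f - g) = Delta f - Delta g" "Delta (cmul c f) = cmul c (Delta f)"
  by (simp_all add: Delta_def)

lemmas conc2 = ksign_def cmul_neg1 r1_def r2_def r3_def r4_def p1_def p2_def E_def
  poly_mapping_eq_iff fun_eq_iff lookup_add lookup_minus lookup_w2

lemma D_r1: "Delta (r1 q) \<in> K2 q"
proof (rule K2_eq)
  show "Delta (r1 q) = tlf [Xp] (r1 q) + trf [Xp] (r1 q)" by (simp add: conc2)
  show "tlf [Xp] (r1 q) + trf [Xp] (r1 q) \<in> K2 q" by (intro K2_add tlf_in trf_in rels_in)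
qed

lemma D_r2: "Delta (r2 q) \<in> K2 q"
proof (rule K2_eq)
  show "Delta (r2 q) = tlf [Xm] (E q) + tlf [Xi] (r2 q) + trf [Xi] (r2 q) + trf [Xm] (E q)" by (simp add: conc2)
  show "tlf [Xm] (E q) + tlf [Xi] (r2 q) + trf [Xi] (r2 q) + trf [Xm] (E q) \<in> K2 q"
    by (intro K2_add tlf_in trf_in rels_in E_in)
qed

lemma D_r3: "Delta (r3 q) \<in> K2 q"
proof (rule K2_eq)
  show "Delta (r3 q) = tlf [] (r3 q) + trf [] (r3 q) + tlf [Xm, Xp] p2 + trf [Xm, Xp] p2
      - cmul (inverse (q ^ 2)) (tlf [Xp, Xm] p1) - cmul (inverse (q ^ 2)) (trf [Xp, Xm] p1)" by (simp add: conc2)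
  show "tlf [] (r3 q) + trf [] (r3 q) + tlf [Xm, Xp] p2 + trf [Xm, Xp] p2
      - cmul (inverse (q ^ 2)) (tlf [Xp, Xm] p1) - cmul (inverse (q ^ 2)) (trf [Xp, Xm] p1) \<in> K2 q"
    by (intro K2_add K2_diff K2_cmul tlf_in trf_in rels_in)
qed

lemma D_r4: "Delta (r4 q) \<in> K2 q"
proof (rule K2_eq)
  show "Delta (r4 q) = tlf [] (r4 q) + trf [] (r4 q)
      - cmul (csqrt q * (q - 1)) (tlf [Xm, Xp] p2) - cmul (csqrt q * (q - 1)) (trf [Xm, Xp] p2)" by (simp add: conc2)
  show "tlf [] (r4 q) + trf [] (r4 q)
      - cmul (csqrt q * (q - 1)) (tlf [Xm, Xp] p2) - cmul (csqrt q * (q - 1)) (trf [Xm, Xp] p2) \<in> K2 q"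
    by (intro K2_add K2_diff K2_cmul tlf_in trf_in rels_in)
qed

lemma D_p1: "Delta p1 \<in> K2 q"
proof (rule K2_eq)
  show "Delta p1 = tlf [Xp, Xi] p1 + trf [] p1" by (simp add: conc2)
  show "tlf [Xp, Xi] p1 + trf [] p1 \<in> K2 q" by (intro K2_add tlf_in trf_in rels_in)
qed

lemma D_p2: "Delta p2 \<in> K2 q"
proof (rule K2_eq)
  show "Delta p2 = tlf [Xi, Xp] p2 + trf [] p2" by (simp add: conc2)
  show "tlf [Xi, Xp] p2 + trf [] p2 \<in> K2 q" by (intro K2_add tlf_in trf_in rels_in)
qed

lemma Delta_rels: "r \<in> rels q \<Longrightarrow> Delta r \<in> K2 q"
  unfolding rels_eq using D_r1 D_r2 D_r3 D_r4 D_p1 D_p2 by blast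

lemma Delta_sand: "Delta (sand a b r) = bmul m2 (bmul m2 (Dw a) (Delta r)) (Dw b)"
proof -
  have "Delta (sand a b r) = lin (\<lambda>v. Delta (w (a @ v @ b))) r"
    unfolding sand_def by (rule lin_comp) simp
  also have "\<dots> = lin (\<lambda>v. bmul m2 (bmul m2 (Dw a) (Dw v)) (Dw b)) r"
    by (simp add: Dw_append m2_assoc)
  also have "\<dots> = bmul m2 (bmul m2 (Dw a) (lin Dw r)) (Dw b)"
    by (rule lin_comp[symmetric]) simp
  finally show ?thesis by (simp add: Delta_def)
qed

definition "K2S q = {lin (\<lambda>u. Poly_Mapping.single (u, v) 1) i | i v. i \<in> Iq q}
               \<union> {lin (\<lambda>u. Poly_Mapping.single (v, u) 1) i | i v. i \<in> Iq q}"
lemma K2_S: "K2 q = cspan (K2S q)" by (simp add: K2_def K2S_def)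

lemma Delta_Iq: assumes "f \<in> Iq q" shows "Delta f \<in> K2 q"
proof -
  from assms have f: "f \<in> cspan {sand a b r | a b r. r \<in> rels q}" by (simp add: Iq_alt)
  have "Delta f \<in> cspan (K2S q)"
  proof (rule islin_cspan[OF islin_Delta _ f])
    fix s assume "s \<in> {sand a b r | a b r. r \<in> rels q}"
    then obtain a b r where s: "s = sand a b r" "r \<in> rels q" by blast
    have "Delta s \<in> K2 q" unfolding s(1) Delta_sand
      by (intro K2_left K2_right Delta_rels s(2))
    then show "Delta s \<in> cspan (K2S q)" by (simp add: K2_S)
  qed
  then show ?thesis by (simp add: K2_S)
qed


declare m1_simp[simp del]

lemma Tp_cmul: "Tp p (cmul c Z) Y = cmul c (Tp p Z Y)"
  by (simp add: Tp_def lin_def cmul_sum mult_ac)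
lemma Up_cmul: "Up p (cmul c Z) Y = cmul c (Up p Z Y)"
  by (simp add: Up_def lin_def cmul_sum mult_ac)

lemma Tp_minus: "Tp p (- Z) Y = - Tp p Z Y" by (metis Tp_cmul cmul_neg1)
lemma Up_minus: "Up p (- Z) Y = - Up p Z Y" by (metis Up_cmul cmul_neg1)

lemma Tp_diff: "Tp p (Z1 - Z2) Y = Tp p Z1 Y - Tp p Z2 Y" by (metis Tp_add Tp_minus diff_conv_add_uminus)
lemma Up_diff: "Up p (Z1 - Z2) Y = Up p Z1 Y - Up p Z2 Y" by (metis Up_add Up_minus diff_conv_add_uminus)

lemma lin_in_Iq: "(\<And>u. \<phi> u \<in> Iq q) \<Longrightarrow> lin \<phi> f \<in> Iq q"
  unfolding Iq_def by (rule lin_in_cspan)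

lemma Tp_Iq: "Z \<in> Iq q \<Longrightarrow> Tp p Z Y \<in> Iq q"
  unfolding Tp_def by (intro lin_in_Iq Iq_cmul Iq_right Iq_left)
lemma Up_Iq: "Z \<in> Iq q \<Longrightarrow> Up p Z Y \<in> Iq q"
  unfolding Up_def by (intro lin_in_Iq Iq_cmul Iq_right Iq_left)

lemma MS_Dg: "m_S_id (bmul m2 (Dg g) Y) = Tp (par [g]) (m_S_id (Dg g)) Y"
proof (cases g)
  case Xp then show ?thesis using MS[of "[Xp]" "[Xp]" 0 Y] by simp
next
  case Xi then show ?thesis using MS[of "[Xi]" "[Xi]" 0 Y] by simp
next
  case Th then show ?thesis using MS[of "[Th]" "[]" 1 Y] MS[of "[]" "[Th]" 1 Y] by (simp add: Tp_add Tp_minus Tp_zero)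
next
  case Xm then show ?thesis using MS[of "[Xi]" "[Xm]" 0 Y] MS[of "[Xm]" "[Xi]" 0 Y] by (simp add: Tp_add Tp_minus Tp_diff)
qed

lemma MS'_Dg: "m_id_S (bmul m2 Y (Dg g)) = Up (par [g]) (m_id_S (Dg g)) Y"
proof (cases g)
  case Xp then show ?thesis using MS'[of "[Xp]" "[Xp]" 0 Y] by simp
next
  case Xi then show ?thesis using MS'[of "[Xi]" "[Xi]" 0 Y] by simp
next
  case Th then show ?thesis using MS'[of "[Th]" "[]" 1 Y] MS'[of "[]" "[Th]" 1 Y] by (simp add: Up_add Up_minus Up_zero)
next
  case Xm then show ?thesis using MS'[of "[Xi]" "[Xm]" 0 Y] MS'[of "[Xm]" "[Xi]" 0 Y] by (simp add: Up_add Up_minus Up_diff)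
qed

lemma eg_par: "eg g \<noteq> 0 \<Longrightarrow> par [g] = 0" by (cases g) simp_all

lemma mSD: "\<exists>Z. m_S_id (Dg g) = cmul (eg g) one1 + Z \<and> Z \<in> Iq q"
proof (cases g)
  case Xp then show ?thesis by (intro exI[of _ p2] conjI) (simp add: p2_def, rule rels_in)
next
  case Xi then show ?thesis by (intro exI[of _ p1] conjI) (simp add: p1_def, rule rels_in)
next
  case Th then show ?thesis by (intro exI[of _ 0]) (simp add: ksign_def cmul_neg1 Iq_zero)
next
  case Xm
  have "m_S_id (Dg g) = cmul (eg g) one1 + - fmul (w [Xp, Xm]) p1"
    by (simp add: Xm conc)
  moreover have "- fmul (w [Xp, Xm]) p1 \<in> Iq q" by (intro Iq_minus Iq_left rels_in)
  ultimately show ?thesis by blast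
qed

lemma mSD': "\<exists>Z. m_id_S (Dg g) = cmul (eg g) one1 + Z \<and> Z \<in> Iq q"
proof (cases g)
  case Xp then show ?thesis by (intro exI[of _ p1] conjI) (simp add: p1_def, rule rels_in)
next
  case Xi then show ?thesis by (intro exI[of _ p2] conjI) (simp add: p2_def, rule rels_in)
next
  case Th then show ?thesis by (intro exI[of _ 0]) (simp add: ksign_def cmul_neg1 Iq_zero)
next
  case Xm
  have "m_id_S (Dg g) = cmul (eg g) one1 + - fmul p2 (w [Xm, Xp])"
    by (simp add: Xm conc)
  moreover have "- fmul p2 (w [Xm, Xp]) \<in> Iq q" by (intro Iq_minus Iq_right rels_in)
  ultimately show ?thesis by blast
qed

lemma anti_l_w: "m_S_id (Dw u) - cmul (ew u) one1 \<in> Iq q"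
proof (induction u)
  case Nil then show ?case by (simp add: Iq_zero)
next
  case (Cons g u)
  obtain Z where D: "m_S_id (Dg g) = cmul (eg g) one1 + Z" and Z: "Z \<in> Iq q" using mSD by blast
  have e: "m_S_id (Dw (g # u)) = cmul (eg g) (Tp (par [g]) one1 (Dw u)) + Tp (par [g]) Z (Dw u)"
    by (simp add: MS_Dg D Tp_add Tp_cmul)
  show ?case
  proof (cases "eg g = 0")
    case True then show ?thesis using e Tp_Iq[OF Z] by simp
  next
    case False
    then have "par [g] = 0" by (rule eg_par)
    then have eq: "m_S_id (Dw (g # u)) - cmul (ew (g # u)) one1 =
       cmul (eg g) (m_S_id (Dw u) - cmul (ew u) one1) + Tp (par [g]) Z (Dw u)"
      using e by (simp add: Tp_one)
    have "cmul (eg g) (m_S_id (Dw u) - cmul (ew u) one1) + Tp (par [g]) Z (Dw u) \<in> Iq q"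
      by (intro Iq_add Iq_cmul Cons Tp_Iq Z)
    then show ?thesis unfolding eq .
  qed
qed

lemma anti_r_w: "m_id_S (Dw u) - cmul (ew u) one1 \<in> Iq q"
proof (induction u rule: rev_induct)
  case Nil then show ?case by (simp add: Iq_zero)
next
  case (snoc g u)
  obtain Z where D: "m_id_S (Dg g) = cmul (eg g) one1 + Z" and Z: "Z \<in> Iq q" using mSD' by blast
  have dw: "Dw (u @ [g]) = bmul m2 (Dw u) (Dg g)" by (simp add: Dw_append)
  have e: "m_id_S (Dw (u @ [g])) = cmul (eg g) (Up (par [g]) one1 (Dw u)) + Up (par [g]) Z (Dw u)"
    by (simp only: dw MS'_Dg D Up_add Up_cmul)
  show ?case
  proof (cases "eg g = 0")
    case True then show ?thesis using e Up_Iq[OF Z] by simp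
  next
    case False
    then have "par [g] = 0" by (rule eg_par)
    then have eq: "m_id_S (Dw (u @ [g])) - cmul (ew (u @ [g])) one1 =
       cmul (eg g) (m_id_S (Dw u) - cmul (ew u) one1) + Up (par [g]) Z (Dw u)"
      using e by (simp add: Up_one mult.commute)
    have "cmul (eg g) (m_id_S (Dw u) - cmul (ew u) one1) + Up (par [g]) Z (Dw u) \<in> Iq q"
      by (intro Iq_add Iq_cmul snoc Up_Iq Z)
    then show ?thesis unfolding eq .
  qed
qed

lemma lin_fun_diff: "lin (\<lambda>u. \<phi> u - \<psi> u) f = lin \<phi> f - lin \<psi> f"
  by (simp add: lin_def sum_subtractf)

lemma antipode_l: "m_S_id (Delta f) - cmul (eps f) one1 \<in> Iq q"
proof -
  have "m_S_id (Delta f) = lin (\<lambda>u. m_S_id (Dw u)) f"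
    unfolding Delta_def by (rule lin_comp) simp
  moreover have "cmul (eps f) one1 = lin (\<lambda>u. cmul (ew u) one1) f"
    unfolding eps_def by (rule cmul_linf)
  ultimately have "m_S_id (Delta f) - cmul (eps f) one1 = lin (\<lambda>u. m_S_id (Dw u) - cmul (ew u) one1) f"
    by (simp add: lin_fun_diff)
  also have "\<dots> \<in> Iq q" by (intro lin_in_Iq anti_l_w)
  finally show ?thesis .
qed

lemma antipode_r: "m_id_S (Delta f) - cmul (eps f) one1 \<in> Iq q"
proof -
  have "m_id_S (Delta f) = lin (\<lambda>u. m_id_S (Dw u)) f"
    unfolding Delta_def by (rule lin_comp) simp
  moreover have "cmul (eps f) one1 = lin (\<lambda>u. cmul (ew u) one1) f"
    unfolding eps_def by (rule cmul_linf)
  ultimately have "m_id_S (Delta f) - cmul (eps f) one1 = lin (\<lambda>u. m_id_S (Dw u) - cmul (ew u) one1) f"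
    by (simp add: lin_fun_diff)
  also have "\<dots> \<in> Iq q" by (intro lin_in_Iq anti_r_w)
  finally show ?thesis .
qed

theorem theorem3p2:
  fixes q :: complex
  assumes "q \<noteq> 0"
  shows
    "(\<forall>f\<in>Iq q. Delta f \<in> K2 q) \<and> (\<forall>f\<in>Iq q. eps f = 0) \<and> (\<forall>f\<in>Iq q. S f \<in> Iq q)
   \<and> (\<forall>f g. Delta (fmul f g) - bmul m2 (Delta f) (Delta g) \<in> K2 q)
   \<and> Delta one1 = w2 [] []
   \<and> (\<forall>f g. eps (fmul f g) = eps f * eps g) \<and> eps one1 = 1
   \<and> (\<forall>a b. S (fmul (w a) (w b)) - cmul (ksign a b) (fmul (S (w b)) (S (w a))) \<in> Iq q)
   \<and> S one1 = one1
   \<and> (\<forall>f. Delta_id (Delta f) - id_Delta (Delta f) \<in> K3 q)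
   \<and> (\<forall>f. m_eps_id (Delta f) - f \<in> Iq q) \<and> (\<forall>f. m_id_eps (Delta f) - f \<in> Iq q)
   \<and> (\<forall>f. m_S_id (Delta f) - cmul (eps f) one1 \<in> Iq q)
   \<and> (\<forall>f. m_id_S (Delta f) - cmul (eps f) one1 \<in> Iq q)"
proof (intro conjI allI ballI)
  show "\<And>f. f \<in> Iq q \<Longrightarrow> Delta f \<in> K2 q" by (rule Delta_Iq)
  show "\<And>f. f \<in> Iq q \<Longrightarrow> eps f = 0" by (rule eps_Iq)
  show "\<And>f. f \<in> Iq q \<Longrightarrow> S f \<in> Iq q" by (rule S_Iq)
  show "\<And>f g. Delta (fmul f g) - bmul m2 (Delta f) (Delta g) \<in> K2 q" by (simp add: Delta_mult K2_zero)
  show "Delta one1 = w2 [] []" by simp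
  show "\<And>f g. eps (fmul f g) = eps f * eps g" by (rule eps_mult)
  show "eps one1 = 1" by simp
  show "\<And>a b. S (fmul (w a) (w b)) - cmul (ksign a b) (fmul (S (w b)) (S (w a))) \<in> Iq q"
    by (simp add: Sw_append Iq_zero)
  show "S one1 = one1" by simp
  show "\<And>f. Delta_id (Delta f) - id_Delta (Delta f) \<in> K3 q"
    by (simp add: coassoc K3_def cspan.zero)
  show "\<And>f. m_eps_id (Delta f) - f \<in> Iq q" by (simp add: counit_l Iq_zero)
  show "\<And>f. m_id_eps (Delta f) - f \<in> Iq q" by (simp add: counit_r Iq_zero)
  show "\<And>f. m_S_id (Delta f) - cmul (eps f) one1 \<in> Iq q" by (rule antipode_l)
  show "\<And>f. m_id_S (Delta f) - cmul (eps f) one1 \<in> Iq q" by (rule antipode_r)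
qed


end
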